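(* Fix $(k_1,k_2,k_3)\in\mathbb Z_{\ge0}^3$ and $\sigma\in\mathfrak S_3$. For every reduced fraction $t\in(0,\infty)\cap\mathbb Q$, \[ C_t=\begin{bmatrix}-1&0\\0&1\end{bmatrix}\overline M_t\begin{bmatrix}1&0\\0&-1\end{bmatrix}, \] where $C_t$ is the $(k_1,k_2,k_3,\sigma)$-generalized Cohn matrix attached to $t$ and $\overline M_t$ is the endpoint-completed matrix.
   Context: $K:=3+k_1+k_2+k_3$. Farey tree $\mathrm{F}\mathbb T$: rooted planar binary tree with root $(\frac01,\frac11,\frac10)$, each vertex $(\frac ab,\frac cd,\frac ef)$ having left child $(\frac ab,\frac{a+c}{b+d},\frac cd)$ and right child $(\frac cd,\frac{c+e}{d+f},\frac ef)$ ($\frac10$ represents $\infty$); write $r\oplus t$ for the mediant. Labeled GM tree $\mathrm M\mathbb T(k_1,k_2,k_3,\sigma)$: rooted planar binary tree with root $((1,\sigma(1)),(k_{\sigma(2)}+2,\sigma(2)),(1,\sigma(3)))$; a vertex $((a,h),(b,i),(c,j))$ has left child $((a,h),(\frac{a^2+k_jab+b^2}{c},j),(b,i))$ and right child $((b,i),(\frac{b^2+k_hbc+c^2}{a},h),(c,j))$. For a vertex $(r,t,s)$ of $\mathrm{F}\mathbb T$, let $((m_r,i_r),(m_t,i_t),(m_s,i_s))$ be the vertex of $\mathrm M\mathbb T$ at the same position, and set $k_r:=k_{i_r}$ (similarly $k_s:=k_{i_s}$); this depends only on the rational, not the vertex. Generalized Cohn matrices: $C_{0/1}=\begin{bmatrix}K&-Kk_{\sigma(1)}-1\\1&-k_{\sigma(1)}\end{bmatrix}$,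 $C_{1/1}=\begin{bmatrix}K(k_{\sigma(2)}+2)-k_{\sigma(2)}-1&K-1\\k_{\sigma(2)}+2&1\end{bmatrix}$, $C_{1/0}=\begin{bmatrix}K-k_{\sigma(3)}-1&K-k_{\sigma(3)}-2\\1&1\end{bmatrix}$, and for every vertex $(r,t,s)$ of $\mathrm{F}\mathbb T$, $C_{r\oplus t}=C_rC_t-D_s$ and $C_{t\oplus s}=C_tC_s-D_r$, where $D_u:=\begin{bmatrix}k_u&Kk_u\\0&k_u\end{bmatrix}$. Modified lattice: the planar graph with vertex set $\mathbb Z^2$ whose edges are the horizontal unit segments, the vertical unit segments, and the diagonal segments of slope $-1$ joining $(i,j+1)$ and $(i+1,j)$. Endpoint-completed word $\overline\omega_t$: for $t=p/q$ reduced, choose $\varepsilon>0$ sufficiently small (so that the shifted segment has the same order of edge and triangle events away from the endpoints and passes through no lattice vertex and no edge midpoint), and let $\overline L_t$ be the segment from $(-\varepsilon,0)$ to $(q-\varepsilon,p)$, oriented from lower left to upper right. Read the edges of the modified lattice crossed by $\overline L_t$ in order, with the half-open convention that the horizontal edge containing the initial endpoint is counted as crossed and the edge containing the terminal endpoint is not. A horizontal (resp. diagonal, vertical) edge contributes $x$ (resp. $y$, $z$) if its midpoint is not on the right-hand side of $\overline L_t$, and $x^{-1}$ (resp. $y^{-1}$, $z^{-1}$) if it is. The concatenation is $\overline\omega_t$. Endpoint-completed matrix: $\overline M_t$ is obtained from $\overline\omega_t$ by substituting $x\mapsto X=\begin{bmatrix}-k_{\sigma(1)}&-1\\1&0\end{bmatrix}$,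 $y\mapsto Y=\begin{bmatrix}1&-1\\k_{\sigma(2)}+2&-k_{\sigma(2)}-1\end{bmatrix}$, $z\mapsto Z=\begin{bmatrix}1&-k_{\sigma(3)}-2\\1&-k_{\sigma(3)}-1\end{bmatrix}$ and multiplying. *)

theory Defs
  imports "HOL-Analysis.Analysis" "HOL-Combinatorics.Permutations"
begin

datatype m2 = M2 int int int int

fun m2_mult :: "m2 \<Rightarrow> m2 \<Rightarrow> m2" where
  "m2_mult (M2 a b c d) (M2 e f g h) = M2 (a*e+b*g) (a*f+b*h) (c*e+d*g) (c*f+d*h)"

fun m2_minus :: "m2 \<Rightarrow> m2 \<Rightarrow> m2" where
  "m2_minus (M2 a b c d) (M2 e f g h) = M2 (a-e) (b-f) (c-g) (d-h)"

definition m2_one :: m2 where "m2_one = M2 1 0 0 1"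

fun m2_det :: "m2 \<Rightarrow> int" where
  "m2_det (M2 a b c d) = a*d - b*c"

text \<open>Adjugate; for a matrix of determinant 1 this is its inverse.\<close>
fun m2_adj :: "m2 \<Rightarrow> m2" where
  "m2_adj (M2 a b c d) = M2 d (-b) (-c) a"

definition kfun :: "nat \<Rightarrow> nat \<Rightarrow> nat \<Rightarrow> nat \<Rightarrow> int" where
  "kfun k1 k2 k3 i = (if i = 1 then int k1 else if i = 2 then int k2 else int k3)"

definition Kc :: "(nat \<Rightarrow> int) \<Rightarrow> int" where
  "Kc k = 3 + k 1 + k 2 + k 3"

section \<open>Farey tree (fraction a/b encoded as the pair (a,b); 1/0 is infinity)\<close>

type_synonym frac = "nat \<times> nat"
type_synonym ftrip = "frac \<times> frac \<times> frac"

definition mediant :: "frac \<Rightarrow> frac \<Rightarrow> frac" where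
  "mediant r t = (fst r + fst t, snd r + snd t)"

text \<open>A position in a rooted planar binary tree is a list of directions
  (True = left child, False = right child); the head of the list is the last step.\<close>
fun farey_child :: "bool \<Rightarrow> ftrip \<Rightarrow> ftrip" where
  "farey_child d (r, t, s) = (if d then (r, mediant r t, t) else (t, mediant t s, s))"

fun farey_vertex :: "bool list \<Rightarrow> ftrip" where
  "farey_vertex [] = ((0,1), (1,1), (1,0))"
| "farey_vertex (d # w) = farey_child d (farey_vertex w)"

type_synonym gtrip = "(int \<times> nat) \<times> (int \<times> nat) \<times> (int \<times> nat)"

fun gm_child :: "(nat \<Rightarrow> int) \<Rightarrow> bool \<Rightarrow> gtrip \<Rightarrow> gtrip" where
  "gm_child k d ((a,h), (b,i), (c,j)) =
     (if d then ((a,h), ((a^2 + k j * a * b + b^2) div c, j), (b,i))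
      else ((b,i), ((b^2 + k h * b * c + c^2) div a, h), (c,j)))"

fun gm_vertex :: "(nat \<Rightarrow> int) \<Rightarrow> (nat \<Rightarrow> nat) \<Rightarrow> bool list \<Rightarrow> gtrip" where
  "gm_vertex k \<sigma> [] = ((1, \<sigma> 1), (k (\<sigma> 2) + 2, \<sigma> 2), (1, \<sigma> 3))"
| "gm_vertex k \<sigma> (d # w) = gm_child k d (gm_vertex k \<sigma> w)"

definition C01 :: "(nat \<Rightarrow> int) \<Rightarrow> (nat \<Rightarrow> nat) \<Rightarrow> m2" where
  "C01 k \<sigma> = M2 (Kc k) (- Kc k * k (\<sigma> 1) - 1) 1 (- k (\<sigma> 1))"

definition C11 :: "(nat \<Rightarrow> int) \<Rightarrow> (nat \<Rightarrow> nat) \<Rightarrow> m2" where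
  "C11 k \<sigma> = M2 (Kc k * (k (\<sigma> 2) + 2) - k (\<sigma> 2) - 1) (Kc k - 1) (k (\<sigma> 2) + 2) 1"

definition C10 :: "(nat \<Rightarrow> int) \<Rightarrow> (nat \<Rightarrow> nat) \<Rightarrow> m2" where
  "C10 k \<sigma> = M2 (Kc k - k (\<sigma> 3) - 1) (Kc k - k (\<sigma> 3) - 2) 1 1"

text \<open>D_u for a rational u whose label is l (so k_u = k l).\<close>
definition Dmat :: "(nat \<Rightarrow> int) \<Rightarrow> nat \<Rightarrow> m2" where
  "Dmat k l = M2 (k l) (Kc k * k l) 0 (k l)"

text \<open>Triple (C_r, C_t, C_s) at the vertex (r,t,s) of the Farey tree at a given position;
  the labels are read off the GM tree at the same position.\<close>
fun cohn_vertex :: "(nat \<Rightarrow> int) \<Rightarrow> (nat \<Rightarrow> nat) \<Rightarrow> bool list \<Rightarrow> m2 \<times> m2 \<times> m2" where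
  "cohn_vertex k \<sigma> [] = (C01 k \<sigma>, C11 k \<sigma>, C10 k \<sigma>)"
| "cohn_vertex k \<sigma> (d # w) =
     (case cohn_vertex k \<sigma> w of (Cr, Ct, Cs) \<Rightarrow>
      case gm_vertex k \<sigma> w of ((_, h), (_, i), (_, j)) \<Rightarrow>
        (if d then (Cr, m2_minus (m2_mult Cr Ct) (Dmat k j), Ct)
         else (Ct, m2_minus (m2_mult Ct Cs) (Dmat k h), Cs)))"

definition cohn_matrix :: "(nat \<Rightarrow> int) \<Rightarrow> (nat \<Rightarrow> nat) \<Rightarrow> nat \<Rightarrow> nat \<Rightarrow> m2" where
  "cohn_matrix k \<sigma> p q =
     fst (snd (cohn_vertex k \<sigma> (SOME w. fst (snd (farey_vertex w)) = (p, q))))"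

datatype etype = Hor | Diag | Vert

type_synonym edge = "etype \<times> int \<times> int"

fun edge_ends :: "edge \<Rightarrow> (real \<times> real) \<times> (real \<times> real)" where
  "edge_ends (Hor, i, j) = ((of_int i, of_int j), (of_int i + 1, of_int j))"
| "edge_ends (Diag, i, j) = ((of_int i, of_int j + 1), (of_int i + 1, of_int j))"
| "edge_ends (Vert, i, j) = ((of_int i, of_int j), (of_int i, of_int j + 1))"

definition edge_mid :: "edge \<Rightarrow> real \<times> real" where
  "edge_mid e = (case edge_ends e of ((x1, y1), (x2, y2)) \<Rightarrow> ((x1 + x2) / 2, (y1 + y2) / 2))"

definition seg_point :: "nat \<Rightarrow> nat \<Rightarrow> real \<Rightarrow> real \<Rightarrow> real \<times> real" where
  "seg_point p q \<epsilon> s = (- \<epsilon> + s * real q, s * real p)"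

definition crosses_at :: "nat \<Rightarrow> nat \<Rightarrow> real \<Rightarrow> edge \<Rightarrow> real \<Rightarrow> bool" where
  "crosses_at p q \<epsilon> e s \<longleftrightarrow> 0 \<le> s \<and> s < 1 \<and>
     (\<exists>u\<in>{0..1::real}. case edge_ends e of ((x1, y1), (x2, y2)) \<Rightarrow>
        seg_point p q \<epsilon> s = ((1 - u) * x1 + u * x2, (1 - u) * y1 + u * y2))"

definition crossed_edges :: "nat \<Rightarrow> nat \<Rightarrow> real \<Rightarrow> edge set" where
  "crossed_edges p q \<epsilon> = {e. \<exists>s. crosses_at p q \<epsilon> e s}"

definition cross_param :: "nat \<Rightarrow> nat \<Rightarrow> real \<Rightarrow> edge \<Rightarrow> real" where
  "cross_param p q \<epsilon> e = (THE s. crosses_at p q \<epsilon> e s)"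

definition crossed_list :: "nat \<Rightarrow> nat \<Rightarrow> real \<Rightarrow> edge list" where
  "crossed_list p q \<epsilon> = (THE es. distinct es \<and> set es = crossed_edges p q \<epsilon> \<and>
      sorted_wrt (\<lambda>e f. cross_param p q \<epsilon> e < cross_param p q \<epsilon> f) es)"

definition right_side :: "nat \<Rightarrow> nat \<Rightarrow> real \<Rightarrow> real \<times> real \<Rightarrow> bool" where
  "right_side p q \<epsilon> P \<longleftrightarrow> real q * snd P - real p * (fst P + \<epsilon>) < 0"

text \<open>A letter: edge type (Hor = x, Diag = y, Vert = z) with exponent +1 (True) or -1 (False).\<close>
definition word_eps :: "nat \<Rightarrow> nat \<Rightarrow> real \<Rightarrow> (etype \<times> bool) list" where
  "word_eps p q \<epsilon> = map (\<lambda>e. (fst e, \<not> right_side p q \<epsilon> (edge_mid e))) (crossed_list p q \<epsilon>)"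

definition omega_bar :: "nat \<Rightarrow> nat \<Rightarrow> (etype \<times> bool) list" where
  "omega_bar p q = (THE w. eventually (\<lambda>\<epsilon>. word_eps p q \<epsilon> = w) (at_right 0))"

definition Xm :: "(nat \<Rightarrow> int) \<Rightarrow> (nat \<Rightarrow> nat) \<Rightarrow> m2" where
  "Xm k \<sigma> = M2 (- k (\<sigma> 1)) (-1) 1 0"
definition Ym :: "(nat \<Rightarrow> int) \<Rightarrow> (nat \<Rightarrow> nat) \<Rightarrow> m2" where
  "Ym k \<sigma> = M2 1 (-1) (k (\<sigma> 2) + 2) (- k (\<sigma> 2) - 1)"
definition Zm :: "(nat \<Rightarrow> int) \<Rightarrow> (nat \<Rightarrow> nat) \<Rightarrow> m2" where
  "Zm k \<sigma> = M2 1 (- k (\<sigma> 3) - 2) 1 (- k (\<sigma> 3) - 1)"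

lemma det_XYZ: "m2_det (Xm k \<sigma>) = 1" "m2_det (Ym k \<sigma>) = 1" "m2_det (Zm k \<sigma>) = 1"
  by (simp_all add: Xm_def Ym_def Zm_def algebra_simps)

fun letter_matrix :: "(nat \<Rightarrow> int) \<Rightarrow> (nat \<Rightarrow> nat) \<Rightarrow> etype \<times> bool \<Rightarrow> m2" where
  "letter_matrix k \<sigma> (Hor, b) = (if b then Xm k \<sigma> else m2_adj (Xm k \<sigma>))"
| "letter_matrix k \<sigma> (Diag, b) = (if b then Ym k \<sigma> else m2_adj (Ym k \<sigma>))"
| "letter_matrix k \<sigma> (Vert, b) = (if b then Zm k \<sigma> else m2_adj (Zm k \<sigma>))"

definition word_matrix :: "(nat \<Rightarrow> int) \<Rightarrow> (nat \<Rightarrow> nat) \<Rightarrow> (etype \<times> bool) list \<Rightarrow> m2" where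
  "word_matrix k \<sigma> w = foldr (\<lambda>l M. m2_mult (letter_matrix k \<sigma> l) M) w m2_one"

definition M_bar :: "(nat \<Rightarrow> int) \<Rightarrow> (nat \<Rightarrow> nat) \<Rightarrow> nat \<Rightarrow> nat \<Rightarrow> m2" where
  "M_bar k \<sigma> p q = word_matrix k \<sigma> (omega_bar p q)"

end

theory Submission
  imports Defs
begin

fun m2_add :: "m2 \<Rightarrow> m2 \<Rightarrow> m2" where
  "m2_add (M2 a b c d) (M2 e f g h) = M2 (a+e) (b+f) (c+g) (d+h)"

fun m2_smult :: "int \<Rightarrow> m2 \<Rightarrow> m2" where
  "m2_smult s (M2 a b c d) = M2 (s*a) (s*b) (s*c) (s*d)"

fun m2_tr :: "m2 \<Rightarrow> int" where
  "m2_tr (M2 a b c d) = a + d"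

lemma m2_mult_assoc: "m2_mult (m2_mult A B) C = m2_mult A (m2_mult B C)"
  by (cases A; cases B; cases C) (simp add: algebra_simps)

lemma m2_one_left[simp]: "m2_mult m2_one A = A"
  by (cases A) (simp add: m2_one_def)

lemma m2_one_right[simp]: "m2_mult A m2_one = A"
  by (cases A) (simp add: m2_one_def)

lemma m2_adj_mult: "m2_adj (m2_mult A B) = m2_mult (m2_adj B) (m2_adj A)"
  by (cases A; cases B) (simp add: algebra_simps)

lemma m2_adj_adj[simp]: "m2_adj (m2_adj A) = A"
  by (cases A) simp

lemma m2_det_mult: "m2_det (m2_mult A B) = m2_det A * m2_det B"
  by (cases A; cases B) (simp add: algebra_simps)

lemma m2_mult_adj_det1: "m2_det A = 1 \<Longrightarrow> m2_mult A (m2_adj A) = m2_one"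
  by (cases A) (simp add: m2_one_def algebra_simps)

lemma m2_add_adj: "m2_add A (m2_adj A) = m2_smult (m2_tr A) m2_one"
  by (cases A) (simp add: m2_one_def algebra_simps)

lemma m2_mult_add_distrib: "m2_mult A (m2_add B C) = m2_add (m2_mult A B) (m2_mult A C)"
  by (cases A; cases B; cases C) (simp add: algebra_simps)

lemma m2_mult_add_distrib2: "m2_mult (m2_add B C) A = m2_add (m2_mult B A) (m2_mult C A)"
  by (cases A; cases B; cases C) (simp add: algebra_simps)

lemma m2_mult_smult: "m2_mult A (m2_smult s B) = m2_smult s (m2_mult A B)"
  by (cases A; cases B) (simp add: algebra_simps)

lemma m2_mult_smult2: "m2_mult (m2_smult s B) A = m2_smult s (m2_mult B A)"
  by (cases A; cases B) (simp add: algebra_simps)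

lemma m2_smult_one_mult: "m2_mult A (m2_mult (m2_smult s m2_one) B) = m2_smult s (m2_mult A B)"
  by (cases A; cases B) (simp add: m2_one_def algebra_simps)

definition linv :: "etype \<times> bool \<Rightarrow> etype \<times> bool" where
  "linv l = (fst l, \<not> snd l)"

lemma letter_det: "m2_det (letter_matrix k \<sigma> l) = 1"
proof (cases l)
  case (Pair t b)
  then show ?thesis
    by (cases t; cases b) (simp_all add: Xm_def Ym_def Zm_def algebra_simps)
qed

lemma letter_linv: "letter_matrix k \<sigma> (linv l) = m2_adj (letter_matrix k \<sigma> l)"
proof (cases l)
  case (Pair t b)
  then show ?thesis by (cases t; cases b) (simp_all add: linv_def)
qed

lemma word_matrix_Nil[simp]: "word_matrix k \<sigma> [] = m2_one"
  by (simp add: word_matrix_def)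

lemma word_matrix_Cons[simp]: "word_matrix k \<sigma> (l # w) = m2_mult (letter_matrix k \<sigma> l) (word_matrix k \<sigma> w)"
  by (simp add: word_matrix_def)

lemma word_matrix_append: "word_matrix k \<sigma> (u @ v) = m2_mult (word_matrix k \<sigma> u) (word_matrix k \<sigma> v)"
  by (induction u) (simp_all add: m2_mult_assoc)

lemma word_matrix_det: "m2_det (word_matrix k \<sigma> u) = 1"
  by (induction u) (simp_all add: m2_det_mult letter_det m2_one_def)

lemma word_matrix_rev_inv: "word_matrix k \<sigma> (rev (map linv u)) = m2_adj (word_matrix k \<sigma> u)"
proof (induction u)
  case Nil then show ?case by (simp add: m2_one_def)
next
  case (Cons a u)
  then show ?case by (simp add: word_matrix_append letter_linv m2_adj_mult)
qed

lemma word_matrix_uv_cancel: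
  "m2_mult (word_matrix k \<sigma> u) (word_matrix k \<sigma> (rev (map linv u))) = m2_one"
  by (simp add: word_matrix_rev_inv m2_mult_adj_det1 word_matrix_det)

lemma word_flip_sum:
  assumes "i < length A"
  shows "m2_add (word_matrix k \<sigma> A) (word_matrix k \<sigma> (A[i := linv (A!i)])) =
         m2_smult (m2_tr (letter_matrix k \<sigma> (A!i)))
           (word_matrix k \<sigma> (take i A @ drop (Suc i) A))"
proof -
  have A: "A = take i A @ [A!i] @ drop (Suc i) A"
    using assms by (simp add: id_take_nth_drop)
  have B: "A[i := linv (A!i)] = take i A @ [linv (A!i)] @ drop (Suc i) A"
    using assms by (simp add: upd_conv_take_nth_drop)
  define U where "U = word_matrix k \<sigma> (take i A)"
  define V where "V = word_matrix k \<sigma> (drop (Suc i) A)"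
  define L where "L = letter_matrix k \<sigma> (A!i)"
  have "word_matrix k \<sigma> A = m2_mult U (m2_mult L V)"
    by (subst A) (simp add: word_matrix_append U_def V_def L_def)
  moreover have "word_matrix k \<sigma> (A[i := linv (A!i)]) = m2_mult U (m2_mult (m2_adj L) V)"
    by (subst B) (simp add: word_matrix_append U_def V_def L_def letter_linv)
  ultimately have "m2_add (word_matrix k \<sigma> A) (word_matrix k \<sigma> (A[i := linv (A!i)]))
      = m2_mult U (m2_mult (m2_add L (m2_adj L)) V)"
    by (simp add: m2_mult_add_distrib m2_mult_add_distrib2)
  also have "\<dots> = m2_smult (m2_tr L) (m2_mult U V)"
    by (simp add: m2_add_adj m2_mult_smult2 m2_mult_smult)
  finally show ?thesis
    by (simp add: word_matrix_append U_def V_def L_def)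
qed


definition cc :: "int \<Rightarrow> int \<Rightarrow> int \<Rightarrow> int" where
  "cc p q n = (n*q + (p+q) - 1) div (p+q)"

definition dd :: "int \<Rightarrow> int \<Rightarrow> int \<Rightarrow> int" where
  "dd p q n = cc p q n * (p+q) - n*q"

lemma coprime_sum_right:
  assumes c: "coprime p (q::int)"
  shows "coprime (p+q) q"
proof (rule coprimeI)
  fix g assume g: "g dvd p+q" "g dvd q"
  have "g dvd (p+q) - q" by (intro dvd_diff g)
  then have "g dvd p" by simp
  then show "is_unit g" using c g(2) by (intro coprime_common_divisor)
qed

lemma cc_unique:
  assumes "0 < p+q" "(c-1)*(p+q) < n*q" "n*q \<le> c*(p+q)"
  shows "cc p q n = c"
  unfolding cc_def
  by (rule int_div_pos_eq[where r = "n*q + (p+q) - 1 - (p+q)*c"]) (use assms in \<open>simp_all add: algebra_simps\<close>)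

lemma cc_bounds:
  assumes "0 < p+q"
  shows "(cc p q n - 1)*(p+q) < n*q" "n*q \<le> cc p q n * (p+q)"
proof -
  define a where "a = n*q + (p+q) - 1"
  have e: "a = (p+q) * (a div (p+q)) + a mod (p+q)" by simp
  have m0: "0 \<le> a mod (p+q)" "a mod (p+q) < p+q" using assms by simp_all
  have "cc p q n = a div (p+q)" by (simp add: cc_def a_def)
  then show "(cc p q n - 1)*(p+q) < n*q" "n*q \<le> cc p q n * (p+q)"
    using e m0 unfolding a_def by (simp_all add: algebra_simps)
qed

lemma dd_bounds:
  assumes "0 < p+q"
  shows "0 \<le> dd p q n" "dd p q n < p+q"
  using cc_bounds[OF assms, of n] by (simp_all add: dd_def algebra_simps)

lemma cc_step:
  assumes "0 < p+q" "0 \<le> q" "0 \<le> p"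
  shows "cc p q n = cc p q (n-1) \<or> cc p q n = cc p q (n-1) + 1"
proof -
  have d1: "0 \<le> dd p q n" "dd p q n < p+q" "0 \<le> dd p q (n-1)" "dd p q (n-1) < p+q"
    using dd_bounds[OF assms(1)] by auto
  have e: "dd p q n - dd p q (n-1) = (cc p q n - cc p q (n-1)) * (p+q) - q"
    by (simp add: dd_def algebra_simps)
  define x where "x = cc p q n - cc p q (n-1)"
  define X where "X = x * (p+q)"
  have eX: "dd p q n - dd p q (n-1) = X - q" using e by (simp add: X_def x_def)
  have "X < 2*p + 2*q" using d1 eX assms by linarith
  then have "x * (p+q) < 2 * (p+q)" by (simp add: X_def distrib_left)
  then have "x < 2" using assms by (meson mult_right_less_imp_less less_le)
  moreover have "- p - q < X" using d1 eX assms by linarith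
  then have "(-1) * (p+q) < x * (p+q)" by (simp add: X_def)
  then have "-1 < x" using assms by (meson mult_right_less_imp_less less_le)
  ultimately show ?thesis unfolding x_def by linarith
qed


lemma ccA:
  fixes a b c d n :: int
  assumes det: "b*c = a*d + 1" and a: "1 \<le> a" and b: "1 \<le> b" and c: "1 \<le> c" and d: "0 \<le> d"
    and n: "-1 \<le> n" "n \<le> a+b"
  shows "cc (a+c) (b+d) n = cc a b n \<and> (a+b) * dd (a+c) (b+d) n = (a+b+c+d) * dd a b n + n"
proof -
  define c0 where "c0 = cc a b n"
  define dr where "dr = dd a b n"
  define D where "D = c0*(a+b+c+d) - n*(b+d)"
  have dr0: "0 \<le> dr" "dr < a+b" using dd_bounds[of a b n] a b by (simp_all add: dr_def)
  have dre: "dr = c0*(a+b) - n*b" by (simp add: dr_def c0_def dd_def)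
  have key: "(a+b)*D = (a+b+c+d)*dr + n"
  proof -
    have "(a+b)*D - (a+b+c+d)*dr = n*(b*c - a*d)"
      by (simp add: D_def dre algebra_simps)
    then show ?thesis using det by simp
  qed
  have t1: "(a+b+c+d)*dr \<ge> 0" using dr0 a b c d by simp
  have D0: "0 \<le> D"
  proof (rule ccontr)
    assume "\<not> 0 \<le> D"
    then have "D \<le> -1" by simp
    then have "(a+b)*D \<le> (a+b)*(-1)" using a b by (intro mult_left_mono) auto
    then have "(a+b)*D \<le> -a-b" by simp
    then show False using key t1 n a b by linarith
  qed
  have D1: "D < a+b+c+d"
  proof (rule ccontr)
    assume "\<not> D < a+b+c+d"
    then have "(a+b)*(a+b+c+d) \<le> (a+b)*D" using a b by (intro mult_left_mono) auto
    moreover have "(a+b+c+d)*dr \<le> (a+b+c+d)*(a+b-1)" using dr0 a b c d by (intro mult_left_mono) auto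
    ultimately show False using key n a b c d by (simp add: algebra_simps)
  qed
  have cct: "cc (a+c) (b+d) n = c0"
    by (rule cc_unique) (use D0 D1 a b c d in \<open>simp_all add: D_def algebra_simps\<close>)
  have "dd (a+c) (b+d) n = D" unfolding dd_def cct by (simp add: D_def algebra_simps)
  then show ?thesis using cct key by (simp add: c0_def dr_def)
qed

lemma ccB:
  fixes a b c d m :: int
  assumes det: "b*c = a*d + 1" and a: "1 \<le> a" and b: "1 \<le> b" and c: "1 \<le> c" and d: "0 \<le> d"
    and m: "-1 \<le> m" "m \<le> c+d"
  shows "cc (a+c) (b+d) (a+b+m) = b + cc c d m \<and>
         (c+d) * dd (a+c) (b+d) (a+b+m) = (a+b+c+d) * dd c d m + (c+d) - m"
proof -
  define c0 where "c0 = cc c d m"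
  define ds where "ds = dd c d m"
  define D where "D = (b+c0)*(a+b+c+d) - (a+b+m)*(b+d)"
  have ds0: "0 \<le> ds" "ds < c+d" using dd_bounds[of c d m] c d by (simp_all add: ds_def)
  have dse: "ds = c0*(c+d) - m*d" by (simp add: ds_def c0_def dd_def)
  have key: "(c+d)*D = (a+b+c+d)*ds + (c+d) - m"
  proof -
    have "(c+d)*D - (a+b+c+d)*ds = (c+d)*(b*c - a*d) - m*(b*c - a*d)"
      by (simp add: D_def dse algebra_simps)
    then show ?thesis using det by simp
  qed
  have t1: "(a+b+c+d)*ds \<ge> 0" using ds0 a b c d by simp
  have D0: "0 \<le> D"
  proof (rule ccontr)
    assume "\<not> 0 \<le> D"
    then have "D \<le> -1" by simp
    then have "(c+d)*D \<le> (c+d)*(-1)" using c d by (intro mult_left_mono) auto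
    then have "(c+d)*D \<le> -c-d" by simp
    then show False using key t1 m c d by linarith
  qed
  have D1: "D < a+b+c+d"
  proof (rule ccontr)
    assume "\<not> D < a+b+c+d"
    then have "(c+d)*(a+b+c+d) \<le> (c+d)*D" using c d by (intro mult_left_mono) auto
    moreover have "(a+b+c+d)*ds \<le> (a+b+c+d)*(c+d-1)" using ds0 a b c d by (intro mult_left_mono) auto
    ultimately show False using key m a b c d by (simp add: algebra_simps)
  qed
  have cct: "cc (a+c) (b+d) (a+b+m) = b + c0"
    by (rule cc_unique) (use D0 D1 a b c d in \<open>simp_all add: D_def algebra_simps\<close>)
  have "dd (a+c) (b+d) (a+b+m) = D" unfolding dd_def cct by (simp add: D_def algebra_simps)
  then show ?thesis using cct key by (simp add: c0_def ds_def)
qed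


definition ltyp :: "int \<Rightarrow> int \<Rightarrow> nat \<Rightarrow> etype" where
  "ltyp p q k = (if odd k then Diag
     else if cc p q (int (k div 2)) = cc p q (int (k div 2) - 1) then Hor else Vert)"

definition lsig :: "int \<Rightarrow> int \<Rightarrow> nat \<Rightarrow> int" where
  "lsig p q k = (if odd k then (p+q) - 2 * dd p q (int (k div 2))
     else if cc p q (int (k div 2)) = cc p q (int (k div 2) - 1) then p - 2 * dd p q (int (k div 2))
     else q - 2 * dd p q (int (k div 2) - 1))"

definition lett :: "int \<Rightarrow> int \<Rightarrow> nat \<Rightarrow> etype \<times> bool" where
  "lett p q k = (ltyp p q k, 0 < lsig p q k)"

definition Wd :: "int \<Rightarrow> int \<Rightarrow> (etype \<times> bool) list" where
  "Wd p q = map (lett p q) [0..<nat (2*(p+q))]"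

lemma sigA:
  fixes a b c d :: int
  assumes det: "b*c = a*d + 1" and a: "1 \<le> a" and b: "1 \<le> b" and c: "1 \<le> c" and d: "0 \<le> d"
    and k: "k < nat (2*(a+b))"
  shows "ltyp (a+c) (b+d) k = ltyp a b k \<and>
         (a+b) * lsig (a+c) (b+d) k = (a+b+c+d) * lsig a b k - (int k - 1)"
proof -
  define n where "n = int (k div 2)"
  have n0: "0 \<le> n" "n \<le> a+b" using k by (auto simp: n_def)
  have A1: "cc (a+c) (b+d) n = cc a b n \<and> (a+b) * dd (a+c) (b+d) n = (a+b+c+d) * dd a b n + n"
    by (rule ccA) (use assms n0 in auto)
  have A2: "cc (a+c) (b+d) (n-1) = cc a b (n-1) \<and> (a+b) * dd (a+c) (b+d) (n-1) = (a+b+c+d) * dd a b (n-1) + (n-1)"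
    by (rule ccA) (use assms n0 in auto)
  have ty: "ltyp (a+c) (b+d) k = ltyp a b k"
    using A1 A2 by (simp add: ltyp_def n_def[symmetric])
  show ?thesis
  proof (cases "odd k")
    case True
    then have kk: "int k = 2*n + 1" by (simp add: n_def) presburger
    show ?thesis using ty True A1 kk
      by (simp add: lsig_def n_def[symmetric] algebra_simps)
  next
    case False
    then have kk: "int k = 2*n" by (simp add: n_def) presburger
    show ?thesis
    proof (cases "cc a b n = cc a b (n-1)")
      case True
      have e: "(a+b)*(a+c) - (a+b+c+d)*a = 1" using det by (simp add: algebra_simps)
      have "(a+b) * ((a+c) - 2 * dd (a+c) (b+d) n) = (a+b+c+d) * (a - 2 * dd a b n) - (2*n - 1)"
        using A1 e by (simp add: algebra_simps)
      then show ?thesis using ty False True A1 A2 kk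
        by (simp add: lsig_def n_def[symmetric])
    next
      case F2: False
      have e: "(a+b)*(b+d) - (a+b+c+d)*b = -1" using det by (simp add: algebra_simps)
      have "(a+b) * ((b+d) - 2 * dd (a+c) (b+d) (n-1)) = (a+b+c+d) * (b - 2 * dd a b (n-1)) - (2*n - 1)"
        using A2 e by (simp add: algebra_simps)
      then show ?thesis using ty False F2 A1 A2 kk
        by (simp add: lsig_def n_def[symmetric])
    qed
  qed
qed

lemma sigB:
  fixes a b c d :: int
  assumes det: "b*c = a*d + 1" and a: "1 \<le> a" and b: "1 \<le> b" and c: "1 \<le> c" and d: "0 \<le> d"
    and k: "k < nat (2*(c+d))"
  shows "ltyp (a+c) (b+d) (nat (2*(a+b)) + k) = ltyp c d k \<and>
         (c+d) * lsig (a+c) (b+d) (nat (2*(a+b)) + k) = (a+b+c+d) * lsig c d k + (int k - 1 - 2*(c+d))"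
proof -
  define m where "m = int (k div 2)"
  define nt where "nt = a+b+m"
  have m0: "0 \<le> m" "m \<le> c+d" using k by (auto simp: m_def)
  have nn: "int ((nat (2*(a+b)) + k) div 2) = nt"
    using a b by (simp add: m_def nt_def)
  have nt1: "nt - 1 = a+b+(m-1)" by (simp add: nt_def)
  have B1: "cc (a+c) (b+d) nt = b + cc c d m \<and>
         (c+d) * dd (a+c) (b+d) nt = (a+b+c+d) * dd c d m + (c+d) - m"
    unfolding nt_def by (rule ccB) (use assms m0 in auto)
  have B2: "cc (a+c) (b+d) (nt-1) = b + cc c d (m-1) \<and>
         (c+d) * dd (a+c) (b+d) (nt-1) = (a+b+c+d) * dd c d (m-1) + (c+d) - (m-1)"
    unfolding nt1 by (rule ccB) (use assms m0 in auto)
  have e2: "nat (2*(a+b)) = 2 * nat (a+b)" using a b by (simp add: nat_mult_distrib)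
  have oddk: "odd (nat (2*(a+b)) + k) = odd k" unfolding e2 by simp
  have ty: "ltyp (a+c) (b+d) (nat (2*(a+b)) + k) = ltyp c d k"
    using B1 B2 oddk unfolding ltyp_def nn by (simp add: m_def[symmetric])
  show ?thesis
  proof (cases "odd k")
    case True
    then have kk: "int k = 2*m + 1" by (simp add: m_def) presburger
    have "(c+d) * ((a+c+(b+d)) - 2 * dd (a+c) (b+d) nt) = (a+b+c+d) * ((c+d) - 2 * dd c d m) + (2*m - 2*(c+d))"
      using B1 by (simp add: algebra_simps)
    then show ?thesis using ty True oddk kk
      unfolding lsig_def nn by (simp add: m_def[symmetric])
  next
    case False
    then have kk: "int k = 2*m" by (simp add: m_def) presburger
    show ?thesis
    proof (cases "cc c d m = cc c d (m-1)")
      case True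
      have e: "(c+d)*(a+c) - (a+b+c+d)*c = -1" using det by (simp add: algebra_simps)
      have "(c+d) * ((a+c) - 2 * dd (a+c) (b+d) nt) = (a+b+c+d) * (c - 2 * dd c d m) + (2*m - 1 - 2*(c+d))"
        using B1 e by (simp add: algebra_simps)
      moreover have "cc (a+c) (b+d) nt = cc (a+c) (b+d) (nt-1)" using B1 B2 True by simp
      ultimately show ?thesis using ty False True oddk kk
        unfolding lsig_def nn by (simp add: m_def[symmetric])
    next
      case F2: False
      have e: "(c+d)*(b+d) - (a+b+c+d)*d = 1" using det by (simp add: algebra_simps)
      have "(c+d) * ((b+d) - 2 * dd (a+c) (b+d) (nt-1)) = (a+b+c+d) * (d - 2 * dd c d (m-1)) + (2*m - 1 - 2*(c+d))"
        using B2 e by (simp add: algebra_simps)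
      moreover have "cc (a+c) (b+d) nt \<noteq> cc (a+c) (b+d) (nt-1)" using B1 B2 F2 by simp
      ultimately show ?thesis using ty False F2 oddk kk
        unfolding lsig_def nn by (simp add: m_def[symmetric])
    qed
  qed
qed


lemma mul_ge_self: "0 < (x::int) \<Longrightarrow> 1 \<le> B \<Longrightarrow> x \<le> x*B"
  using mult_left_mono[of 1 B x] by simp
lemma mul_le_neg: "0 < (x::int) \<Longrightarrow> B \<le> -1 \<Longrightarrow> x*B \<le> -x"
  using mult_left_mono[of B "-1" x] by simp
lemma mul_ge2: "0 < (x::int) \<Longrightarrow> 2 \<le> B \<Longrightarrow> 2*x \<le> x*B"
  using mult_left_mono[of 2 B x] by simp
lemma mul_le0: "0 < (x::int) \<Longrightarrow> B \<le> 0 \<Longrightarrow> x*B \<le> 0"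
  using mult_left_mono[of B 0 x] by simp

lemma cancel_pos: "0 < (N::int) \<Longrightarrow> N*a < N*b \<Longrightarrow> a < b"
  by (simp add: mult_less_cancel_left_pos)

lemma not_both_even: "coprime p (q::int) \<Longrightarrow> even p \<Longrightarrow> even q \<Longrightarrow> False"
  using coprime_common_divisor[of p q 2] by simp

lemma cc_0: "0 < p \<Longrightarrow> 0 < q \<Longrightarrow> cc p q 0 = 0"
  by (rule cc_unique) auto
lemma cc_m1: "0 < p \<Longrightarrow> 0 < q \<Longrightarrow> cc p q (-1) = 0"
  by (rule cc_unique) auto
lemma cc_1: "0 < p \<Longrightarrow> 0 < q \<Longrightarrow> cc p q 1 = 1"
  by (rule cc_unique) auto

lemma first_letters:
  assumes "0 < p" "0 < q"
  shows "lett p q 0 = (Hor, True)" "lett p q 1 = (Diag, True)" "lett p q 2 = (Vert, True)"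
  using assms by (simp_all add: lett_def ltyp_def lsig_def dd_def cc_0 cc_m1 cc_1)

lemma int_half: "0 \<le> N \<Longrightarrow> int ((nat N + 1) div 2) = (N+1) div 2"
  by (simp add: zdiv_int)

lemma dvd_N_imp:
  fixes p q x :: int
  assumes cop: "coprime p q" and "0 < p" "0 < q" and dv: "(p+q) dvd (x * q)" and x: "0 < x" "x < p+q"
  shows False
proof -
  have "coprime (p+q) q" using coprime_sum_right[OF cop] .
  then have "(p+q) dvd x" using dv by (simp add: coprime_dvd_mult_left_iff)
  then have "p+q \<le> x" using x by (simp add: zdvd_imp_le)
  then show False using x by simp
qed

lemma center:
  assumes cop: "coprime p q" and p: "0 < p" and q: "0 < q"
  shows "lsig p q (nat (p+q) + 1) = 0 \<and>
         ltyp p q (nat (p+q) + 1) = (if even p then Hor else if even q then Vert else Diag)"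
proof -
  define N where "N = p+q"
  have N0: "0 < N" using p q by (simp add: N_def)
  show ?thesis
  proof (cases "even N")
    case True
    define n where "n = N div 2"
    have kodd: "odd (nat N + 1)" using True N0 by (simp add: even_nat_iff)
    have kn: "int ((nat N + 1) div 2) = n" using True N0 int_half[of N] by (simp add: n_def)
    have n2: "2*n = N" using True by (simp add: n_def)
    define x where "x = 2 * cc p q n - q"
    have e: "2 * dd p q n = N * x"
    proof -
      have "2 * dd p q n = 2 * cc p q n * N - (2*n)*q" by (simp add: dd_def N_def algebra_simps)
      also have "\<dots> = N * x" unfolding n2 by (simp add: x_def algebra_simps)
      finally show ?thesis .
    qed
    have b: "0 \<le> dd p q n" "dd p q n < N" using dd_bounds[of p q n] N0 by (simp_all add: N_def)
    have "0 \<le> N*x" using e b by simp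
    then have x0: "0 \<le> x" using N0 by (simp add: zero_le_mult_iff)
    have "N*x < N*2" using e b by linarith
    then have x1: "x < 2" using N0 by simp
    have qo: "odd q" using True cop not_both_even[of p q] by (auto simp: N_def)
    have "odd x" using qo by (simp add: x_def)
    then have "x = 1" using x0 x1 by presburger
    then have "lsig p q (nat N + 1) = 0" using e kodd kn by (simp add: lsig_def N_def)
    moreover have "odd p" using True qo by (simp add: N_def)
    ultimately show ?thesis using kodd qo by (simp add: ltyp_def N_def)
  next
    case False
    define n where "n = (N+1) div 2"
    have keven: "even (nat N + 1)" using False N0 by (simp add: even_nat_iff)
    have kn: "int ((nat N + 1) div 2) = n" using False N0 int_half[of N] by (simp add: n_def)
    have n2: "2*n = N + 1" using False by (simp add: n_def) presburger
    have b: "0 \<le> dd p q n" "dd p q n < N" "0 \<le> dd p q (n-1)" "dd p q (n-1) < N"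
      using dd_bounds[of p q] N0 by (simp_all add: N_def)
    show ?thesis
    proof (cases "cc p q n = cc p q (n-1)")
      case True
      have e1: "dd p q (n-1) = dd p q n + q" unfolding dd_def using True by (simp add: algebra_simps)
      define x where "x = 1 + q - 2 * cc p q n"
      have e: "p - 2 * dd p q n = N * x"
      proof -
        have "p - 2 * dd p q n = p - 2 * cc p q n * N + (2*n)*q" by (simp add: dd_def N_def algebra_simps)
        also have "\<dots> = N * x" unfolding n2 by (simp add: x_def N_def algebra_simps)
        finally show ?thesis .
      qed
      have "N * x < N" using e b p q N_def by linarith
      then have "N * x < N * 1" by simp
      then have "x < 1" by (rule cancel_pos[OF N0])
      moreover have "- N < N * x" using e b e1 N_def by linarith
      then have "N * (-1) < N * x" by simp
      then have "-1 < x" by (rule cancel_pos[OF N0])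
      ultimately have x0: "x = 0" by simp
      then have "odd q" unfolding x_def by presburger
      then have "even p" using False by (simp add: N_def)
      then show ?thesis using True keven kn e x0 by (simp add: ltyp_def lsig_def N_def)
    next
      case F2: False
      then have st: "cc p q n = cc p q (n-1) + 1" using cc_step[of p q n] p q by auto
      have e1: "dd p q n = dd p q (n-1) + p" unfolding dd_def using st by (simp add: algebra_simps)
      define x where "x = q - 2 * cc p q (n-1)"
      have e: "q - 2 * dd p q (n-1) = N * x"
      proof -
        have "q - 2 * dd p q (n-1) = q - 2 * cc p q (n-1) * N + (2*n)*q - 2*q" by (simp add: dd_def N_def algebra_simps)
        also have "\<dots> = N * x" unfolding n2 by (simp add: x_def N_def algebra_simps)
        finally show ?thesis .
      qed
      have "N * x < N" using e b p q N_def by linarith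
      then have "N * x < N * 1" by simp
      then have "x < 1" by (rule cancel_pos[OF N0])
      moreover have "- N < N * x" using e b e1 N_def by linarith
      then have "N * (-1) < N * x" by simp
      then have "-1 < x" by (rule cancel_pos[OF N0])
      ultimately have x0: "x = 0" by simp
      then have "even q" unfolding x_def by presburger
      then have "odd p" using cop not_both_even[of p q] by auto
      then show ?thesis using F2 keven kn e x0 \<open>even q\<close> by (simp add: ltyp_def lsig_def N_def)
    qed
  qed
qed


lemma cc_mirror:
  assumes cop: "coprime p q" and p: "0 < p" and q: "0 < q" and n: "0 < n" "n < p+q"
  shows "cc p q (p+q-n) = q - cc p q n + 1 \<and> dd p q (p+q-n) = (p+q) - dd p q n"
proof -
  have b: "0 \<le> dd p q n" "dd p q n < p+q" using dd_bounds[of p q n] p q by auto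
  have "dd p q n \<noteq> 0"
  proof
    assume "dd p q n = 0"
    then have "n*q = (p+q) * cc p q n" by (simp add: dd_def algebra_simps)
    then have "(p+q) dvd (n*q)" by simp
    then show False using dvd_N_imp[OF cop p q _ n] by simp
  qed
  then have b0: "0 < dd p q n" using b by simp
  have c: "cc p q (p+q-n) = q - cc p q n + 1"
    by (rule cc_unique) (use b0 b p q in \<open>simp_all add: dd_def algebra_simps\<close>)
  have "dd p q (p+q-n) = (q - cc p q n + 1)*(p+q) - (p+q-n)*q" unfolding dd_def c ..
  then show ?thesis using c by (simp add: dd_def[of p q n] algebra_simps)
qed

lemma letter_mirror:
  assumes cop: "coprime p q" and p: "0 < p" and q: "0 < q" and k: "3 \<le> k" "int k \<le> p+q"
  shows "ltyp p q (nat (2*(p+q)+2) - k) = ltyp p q k \<and>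
         lsig p q (nat (2*(p+q)+2) - k) = - lsig p q k \<and> lsig p q k \<noteq> 0"
proof -
  define N where "N = p+q"
  define k' where "k' = nat (2*(p+q)+2) - k"
  have ik': "int k' = 2*N + 2 - int k" using k by (simp add: k'_def N_def)
  define n where "n = int (k div 2)"
  have hk: "int (k' div 2) = (2*N + 2 - int k) div 2" using ik' by (simp add: zdiv_int[symmetric])
  show ?thesis
  proof (cases "odd k")
    case True
    then have kk: "int k = 2*n+1" by (simp add: n_def) presburger
    have ko: "odd k'" using ik' kk by presburger
    have k2: "int (k' div 2) = N - n" using hk kk by simp
    have n1: "0 < n" "n < N" using kk k by (simp_all add: N_def)
    have M: "dd p q (N-n) = N - dd p q n" using cc_mirror[OF cop p q n1[unfolded N_def]] by (simp add: N_def)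
    have nz: "N - 2 * dd p q n \<noteq> 0"
    proof
      assume "N - 2 * dd p q n = 0"
      then have "(2*n)*q = N * (2 * cc p q n - 1)" by (simp add: dd_def N_def algebra_simps)
      then have "(p+q) dvd ((2*n)*q)" by (simp add: N_def)
      then show False using dvd_N_imp[OF cop p q, of "2*n"] kk k by (simp add: N_def)
    qed
    show ?thesis using True ko k2 M nz unfolding k'_def[symmetric]
      by (simp add: ltyp_def lsig_def n_def[symmetric] N_def[symmetric])
  next
    case False
    then have kk: "int k = 2*n" by (simp add: n_def) presburger
    have ko: "even k'" using ik' kk by presburger
    have k2: "int (k' div 2) = N + 1 - n" using hk kk by simp
    have n1: "1 < n" "2*n \<le> N" using kk k by (simp_all add: N_def)
    have M1: "cc p q (N-(n-1)) = q - cc p q (n-1) + 1 \<and> dd p q (N-(n-1)) = N - dd p q (n-1)"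
      using cc_mirror[OF cop p q, of "n-1"] n1 by (simp add: N_def)
    have M2: "cc p q (N-n) = q - cc p q n + 1 \<and> dd p q (N-n) = N - dd p q n"
      using cc_mirror[OF cop p q, of "n"] n1 by (simp add: N_def)
    have e1: "N + 1 - n = N - (n-1)" "N + 1 - n - 1 = N - n" by simp_all
    show ?thesis
    proof (cases "cc p q n = cc p q (n-1)")
      case True
      have d1: "dd p q (n-1) = dd p q n + q" unfolding dd_def using True by (simp add: algebra_simps)
      have nz: "p - 2 * dd p q n \<noteq> 0"
      proof
        assume "p - 2 * dd p q n = 0"
        then have "(2*n-1)*q = N * (2 * cc p q n - 1)" by (simp add: dd_def N_def algebra_simps)
        then have "(p+q) dvd ((2*n-1)*q)" by (simp add: N_def)
        then show False using dvd_N_imp[OF cop p q, of "2*n-1"] kk k by (simp add: N_def)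
      qed
      have "lsig p q k' = p - 2 * dd p q (N - (n-1))"
        using ko k2 M1 M2 True unfolding lsig_def e1 by simp
      then have "lsig p q k' = - (p - 2 * dd p q n)" using M1 d1 by (simp add: N_def)
      then show ?thesis using False True ko k2 M1 M2 nz unfolding k'_def[symmetric]
        by (simp add: ltyp_def lsig_def n_def[symmetric] e1)
    next
      case F2: False
      then have st: "cc p q n = cc p q (n-1) + 1" using cc_step[of p q n] p q by auto
      have d1: "dd p q n = dd p q (n-1) + p" unfolding dd_def using st by (simp add: algebra_simps)
      have nz: "q - 2 * dd p q (n-1) \<noteq> 0"
      proof
        assume "q - 2 * dd p q (n-1) = 0"
        then have "(2*n-1)*q = N * (2 * cc p q (n-1))" by (simp add: dd_def N_def algebra_simps)
        then have "(p+q) dvd ((2*n-1)*q)" by (simp add: N_def)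
        then show False using dvd_N_imp[OF cop p q, of "2*n-1"] kk k by (simp add: N_def)
      qed
      have "lsig p q k' = q - 2 * dd p q (N - n)"
        using ko k2 M1 M2 F2 unfolding lsig_def e1 by simp
      then have "lsig p q k' = - (q - 2 * dd p q (n-1))" using M2 d1 by (simp add: N_def)
      then show ?thesis using False F2 ko k2 M1 M2 nz unfolding k'_def[symmetric]
        by (simp add: ltyp_def lsig_def n_def[symmetric] e1)
    qed
  qed
qed


lemma length_Wd[simp]: "length (Wd p q) = nat (2*(p+q))"
  by (simp add: Wd_def)

lemma nth_Wd[simp]: "k < nat (2*(p+q)) \<Longrightarrow> Wd p q ! k = lett p q k"
  by (simp add: Wd_def)

lemma lsig_pos_small:
  assumes "0 < p" "0 < q" "k \<le> 2"
  shows "0 < lsig p q k"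
proof -
  have "k = 0 \<or> k = 1 \<or> k = 2" using assms by auto
  then show ?thesis using first_letters[OF assms(1,2)] by (auto simp: lett_def)
qed

lemma sig_nonzero:
  assumes cop: "coprime p q" and p: "0 < p" and q: "0 < q"
    and k: "k < nat (2*(p+q))" "k \<noteq> nat (p+q) + 1"
  shows "lsig p q k \<noteq> 0"
proof -
  consider "k \<le> 2" | "3 \<le> k \<and> int k \<le> p+q" | "int k \<ge> p+q+2" using k by linarith
  then show ?thesis
  proof cases
    case 1 then show ?thesis using lsig_pos_small[OF p q] by force
  next
    case 2 then show ?thesis using letter_mirror[OF cop p q] by blast
  next
    case 3
    define k0 where "k0 = nat (2*(p+q)+2) - k"
    have k0: "3 \<le> k0" "int k0 \<le> p+q" using 3 k by (auto simp: k0_def)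
    have "nat (2*(p+q)+2) - k0 = k" using 3 k by (simp add: k0_def)
    then show ?thesis using letter_mirror[OF cop p q k0] by simp
  qed
qed

lemma lett_mirror:
  assumes cop: "coprime p q" and p: "0 < p" and q: "0 < q" and k: "3 \<le> k" "int k \<le> p+q"
  shows "lett p q (nat (2*(p+q)+2) - k) = linv (lett p q k)"
proof -
  have "lsig p q k \<noteq> 0" using letter_mirror[OF assms] by blast
  then have "(0 < - lsig p q k) = (\<not> 0 < lsig p q k)" by linarith
  then show ?thesis using letter_mirror[OF assms] by (simp add: lett_def linv_def)
qed

lemma palindrome:
  assumes cop: "coprime p q" and p: "0 < p" and q: "0 < q"
  shows "word_matrix k \<sigma> (take (nat (p+q) + 1) (Wd p q) @ drop (nat (p+q) + 2) (Wd p q))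
       = word_matrix k \<sigma> [(Hor, True), (Diag, True), (Vert, True)]"
proof -
  define n0 where "n0 = nat (p+q)"
  define W where "W = Wd p q"
  have n0: "2 \<le> n0" using p q by (simp add: n0_def)
  have lW: "length W = 2*n0" using p q by (simp add: W_def n0_def nat_mult_distrib)
  define U where "U = drop 3 (take (n0+1) W)"
  have t3: "take 3 W = [(Hor, True), (Diag, True), (Vert, True)]"
  proof (rule nth_equalityI)
    show "length (take 3 W) = length [(Hor, True), (Diag, True), (Vert, True)]" using lW n0 by simp
  next
    fix i assume "i < length (take 3 W)"
    then have "i < 3" by simp
    then have "i = 0 \<or> i = 1 \<or> i = 2" by auto
    then show "take 3 W ! i = [(Hor, True), (Diag, True), (Vert, True)] ! i"
      using first_letters[OF p q] lW n0 by (auto simp: W_def n0_def)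
  qed
  have tk: "take (n0+1) W = take 3 W @ U"
  proof -
    have h: "take (n0+1) W = take 3 (take (n0+1) W) @ U" unfolding U_def by (rule append_take_drop_id[symmetric])
    have e: "take 3 (take (n0+1) W) = take 3 W" using n0 by (simp add: min_def)
    show ?thesis using h unfolding e .
  qed
  have dr: "drop (n0+2) W = rev (map linv U)"
  proof (rule nth_equalityI)
    show "length (drop (n0+2) W) = length (rev (map linv U))" using lW n0 by (simp add: U_def)
  next
    fix i assume i: "i < length (drop (n0+2) W)"
    then have i2: "i < n0 - 2" using lW by simp
    have "drop (n0+2) W ! i = lett p q (n0+2+i)"
      using i2 lW by (simp add: W_def n0_def nat_mult_distrib)
    moreover have "rev (map linv U) ! i = linv (lett p q (n0 - i))"
    proof -
      have lU: "length U = n0 - 2" using lW n0 by (simp add: U_def)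
      have "rev (map linv U) ! i = linv (U ! (n0 - 3 - i))"
        using i2 lU by (simp add: rev_nth numeral_3_eq_3)
      also have "U ! (n0 - 3 - i) = W ! (n0 - i)"
        using i2 lW n0 by (simp add: U_def)
      also have "W ! (n0 - i) = lett p q (n0 - i)"
        using i2 lW by (simp add: W_def n0_def nat_mult_distrib)
      finally show ?thesis .
    qed
    moreover have "lett p q (nat (2*(p+q)+2) - (n0 - i)) = linv (lett p q (n0 - i))"
      by (rule lett_mirror[OF cop p q]) (use i2 n0 p q in \<open>simp_all add: n0_def\<close>)
    moreover have "nat (2*(p+q)+2) - (n0 - i) = n0+2+i" using i2 n0 p q by (simp add: n0_def)
    ultimately show "drop (n0+2) W ! i = rev (map linv U) ! i" by simp
  qed
  show ?thesis
    unfolding n0_def[symmetric] W_def[symmetric] tk dr t3[symmetric]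
    by (simp add: word_matrix_append word_matrix_uv_cancel m2_mult_assoc)
qed


definition ctype :: "int \<Rightarrow> int \<Rightarrow> etype" where
  "ctype p q = (if even p then Hor else if even q then Vert else Diag)"

lemma signA:
  fixes Nr Ns A B kk :: int
  assumes "2 \<le> Nr" "1 \<le> Ns" "0 \<le> kk" "kk < 2*Nr" "B \<noteq> 0" "Nr*B = (Nr+Ns)*A - (kk - 1)"
  shows "(0 < B) = (0 < A)"
proof -
  have Nr0: "0 < Nr" "0 < Nr+Ns" using assms by auto
  consider "A \<le> 0" | "A = 1" | "2 \<le> A" by linarith
  then show ?thesis
  proof cases
    case 1
    have "(Nr+Ns)*A \<le> 0" using mul_le0[OF Nr0(2) 1] .
    moreover have "\<not> 1 \<le> B"
    proof
      assume "1 \<le> B" then have "Nr \<le> Nr*B" using mul_ge_self[OF Nr0(1)] by simp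
      then show False using assms calculation by linarith
    qed
    ultimately show ?thesis using 1 by auto
  next
    case 2
    have "\<not> B \<le> -1"
    proof
      assume "B \<le> -1" then have "Nr*B \<le> -Nr" using mul_le_neg[OF Nr0(1)] by simp
      then show False using assms 2 by simp
    qed
    then show ?thesis using 2 assms by auto
  next
    case 3
    have "2*(Nr+Ns) \<le> (Nr+Ns)*A" using mul_ge2[OF Nr0(2) 3] .
    then have "2*Nr+2*Ns \<le> (Nr+Ns)*A" by simp
    moreover have "\<not> B \<le> -1"
    proof
      assume "B \<le> -1" then have "Nr*B \<le> -Nr" using mul_le_neg[OF Nr0(1)] by simp
      then show False using assms calculation by linarith
    qed
    ultimately show ?thesis using 3 assms by auto
  qed
qed

lemma signB:
  fixes Nr Ns A B kk :: int
  assumes "2 \<le> Nr" "1 \<le> Ns" "0 \<le> kk" "kk < 2*Ns" "B \<noteq> 0" "Ns*B = (Nr+Ns)*A + (kk - 1 - 2*Ns)"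
  shows "(0 < B) = (0 < A)"
proof -
  have Ns0: "0 < Ns" "0 < Nr+Ns" using assms by auto
  consider "A \<le> 0" | "A = 1" | "2 \<le> A" by linarith
  then show ?thesis
  proof cases
    case 1
    have "(Nr+Ns)*A \<le> 0" using mul_le0[OF Ns0(2) 1] .
    moreover have "\<not> 1 \<le> B"
    proof
      assume "1 \<le> B" then have "Ns \<le> Ns*B" using mul_ge_self[OF Ns0(1)] by simp
      then show False using assms calculation by linarith
    qed
    ultimately show ?thesis using 1 by auto
  next
    case 2
    have "\<not> B \<le> -1"
    proof
      assume "B \<le> -1" then have "Ns*B \<le> -Ns" using mul_le_neg[OF Ns0(1)] by simp
      then show False using assms 2 by simp
    qed
    then show ?thesis using 2 assms by auto
  next
    case 3
    have "2*(Nr+Ns) \<le> (Nr+Ns)*A" using mul_ge2[OF Ns0(2) 3] .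
    then have "2*Nr+2*Ns \<le> (Nr+Ns)*A" by simp
    moreover have "\<not> B \<le> -1"
    proof
      assume "B \<le> -1" then have "Ns*B \<le> -Ns" using mul_le_neg[OF Ns0(1)] by simp
      then show False using assms calculation by linarith
    qed
    ultimately show ?thesis using 3 assms by auto
  qed
qed

lemma det_coprime:
  fixes a b c d :: int
  assumes det: "b*c = a*d + 1"
  shows "coprime a b" "coprime c d" "coprime (a+c) (b+d)"
proof -
  have u: "is_unit g" if "g dvd b*c - a*d" for g using that det by simp
  show "coprime a b" by (rule coprimeI) (rule u, simp)
  show "coprime c d" by (rule coprimeI) (rule u, simp)
  show "coprime (a+c) (b+d)"
  proof (rule coprimeI)
    fix g assume "g dvd a+c" "g dvd b+d"
    then have "g dvd b*(a+c) - a*(b+d)" by simp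
    moreover have "b*(a+c) - a*(b+d) = b*c - a*d" by (simp add: algebra_simps)
    ultimately show "is_unit g" using u by simp
  qed
qed

lemma cancel_eq: "0 < (N::int) \<Longrightarrow> N*A = N \<Longrightarrow> A = 1"
  by (metis mult.right_neutral mult_cancel_left less_irrefl)

lemma F2_list:
  fixes a b c d :: int
  assumes det: "b*c = a*d + 1" and a: "1 \<le> a" and b: "1 \<le> b" and c: "1 \<le> c" and d: "0 \<le> d"
  defines "A \<equiv> Wd a b @ Wd c d" and "i \<equiv> nat (a+b+c+d) + 1"
  shows "i < length A \<and> A ! i = (ctype (a+c) (b+d), True) \<and> Wd (a+c) (b+d) = A[i := linv (A ! i)]"
proof -
  have copt: "coprime (a+c) (b+d)" using det_coprime[OF det] by simp
  have pt: "0 < a+c" "0 < b+d" using a b c d by auto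
  have lA: "length A = nat (2*(a+c+(b+d)))" using a b c d by (simp add: A_def)
  have cen: "lsig (a+c) (b+d) i = 0 \<and> ltyp (a+c) (b+d) i = ctype (a+c) (b+d)"
    using center[OF copt pt] by (simp add: i_def ctype_def add.assoc add.left_commute)
  have iN: "int i - 1 = a+b+c+d" using a b c d by (simp add: i_def)
  have main: "k < length A \<Longrightarrow> ltyp (a+c) (b+d) k = fst (A!k) \<and>
      (k = i \<longrightarrow> snd (A!k) \<and> lsig (a+c) (b+d) k = 0) \<and>
      (k \<noteq> i \<longrightarrow> (0 < lsig (a+c) (b+d) k) = snd (A!k))" for k
  proof -
    assume k: "k < length A"
    have nzt: "k \<noteq> i \<Longrightarrow> lsig (a+c) (b+d) k \<noteq> 0"
      by (rule sig_nonzero[OF copt pt]) (use k lA in \<open>simp_all add: i_def add.assoc add.left_commute\<close>)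
    show ?thesis
    proof (cases "k < nat (2*(a+b))")
      case True
      have Ak: "A ! k = lett a b k" using True by (simp add: A_def nth_append)
      have S: "ltyp (a+c) (b+d) k = ltyp a b k \<and>
         (a+b) * lsig (a+c) (b+d) k = (a+b+c+d) * lsig a b k - (int k - 1)"
        by (rule sigA[OF det a b c d True])
      have r1: "k = i \<Longrightarrow> lsig a b k = 1"
      proof -
        assume ki: "k = i"
        then have "(a+b+c+d) * lsig a b k = a+b+c+d" using S cen iN by simp
        then show ?thesis using a b c d by (intro cancel_eq[of "a+b+c+d"]) auto
      qed
      have r2: "k \<noteq> i \<Longrightarrow> (0 < lsig (a+c) (b+d) k) = (0 < lsig a b k)"
        by (rule signA[where Nr = "a+b" and Ns = "c+d" and kk = "int k"])
           (use a b c d True nzt S in \<open>simp_all add: algebra_simps\<close>)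
      show ?thesis using S cen r1 r2 Ak by (auto simp: lett_def)
    next
      case False
      define k' where "k' = k - nat (2*(a+b))"
      have kk: "k = nat (2*(a+b)) + k'" using False by (simp add: k'_def)
      have k'1: "k' < nat (2*(c+d))" using k lA a b c d by (simp add: k'_def)
      have "A ! k = Wd c d ! k'" using False a b by (simp add: A_def nth_append k'_def)
      also have "\<dots> = lett c d k'" using k'1 by simp
      finally have Ak: "A ! k = lett c d k'" .
      have S: "ltyp (a+c) (b+d) k = ltyp c d k' \<and>
         (c+d) * lsig (a+c) (b+d) k = (a+b+c+d) * lsig c d k' + (int k' - 1 - 2*(c+d))"
        unfolding kk by (rule sigB[OF det a b c d k'1])
      have r1: "k = i \<Longrightarrow> lsig c d k' = 1"
      proof -
        assume ki: "k = i"
        have h2: "int k' = int k - 2*a - 2*b" using kk a b by simp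
        have h1: "(a+b+c+d) * lsig c d k' + (int k' - 1 - 2*c - 2*d) = 0"
          using S cen ki by (simp add: algebra_simps)
        have "(a+b+c+d) * lsig c d k' = a+b+c+d" using h1 h2 iN ki by linarith
        then show ?thesis using a b c d by (intro cancel_eq[of "a+b+c+d"]) auto
      qed
      have r2: "k \<noteq> i \<Longrightarrow> (0 < lsig (a+c) (b+d) k) = (0 < lsig c d k')"
        by (rule signB[where Nr = "a+b" and Ns = "c+d" and kk = "int k'"])
           (use a b c d k'1 nzt S in \<open>simp_all add: algebra_simps\<close>)
      show ?thesis using S cen r1 r2 Ak by (auto simp: lett_def)
    qed
  qed
  have iA: "i < length A" using lA a b c d by (simp add: i_def)
  have Ai: "A ! i = (ctype (a+c) (b+d), True)"
    using main[OF iA] cen by (cases "A ! i") auto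
  have "Wd (a+c) (b+d) = A[i := linv (A ! i)]"
  proof (rule nth_equalityI)
    show "length (Wd (a+c) (b+d)) = length (A[i := linv (A ! i)])" using lA by simp
  next
    fix k assume "k < length (Wd (a+c) (b+d))"
    then have k: "k < length A" using lA by simp
    then have Wk: "Wd (a+c) (b+d) ! k = lett (a+c) (b+d) k" using lA by simp
    show "Wd (a+c) (b+d) ! k = A[i := linv (A ! i)] ! k"
    proof (cases "k = i")
      case True
      then show ?thesis using Wk Ai iA cen by (simp add: lett_def linv_def)
    next
      case False
      then have "A[i := linv (A ! i)] ! k = A ! k" by simp
      then show ?thesis using main[OF k] Wk False by (cases "A ! k") (auto simp: lett_def)
    qed
  qed
  then show ?thesis using iA Ai by simp
qed


abbreviation P3w :: "(etype \<times> bool) list" where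
  "P3w \<equiv> [(Hor, True), (Diag, True), (Vert, True)]"

lemma F2_matrix:
  fixes a b c d :: int
  assumes det: "b*c = a*d + 1" and a: "1 \<le> a" and b: "1 \<le> b" and c: "1 \<le> c" and d: "0 \<le> d"
  shows "m2_add (m2_mult (word_matrix k \<sigma> (Wd a b)) (word_matrix k \<sigma> (Wd c d)))
                (word_matrix k \<sigma> (Wd (a+c) (b+d)))
       = m2_smult (m2_tr (letter_matrix k \<sigma> (ctype (a+c) (b+d), True))) (word_matrix k \<sigma> P3w)"
proof -
  define A where "A = Wd a b @ Wd c d"
  define i where "i = nat (a+b+c+d) + 1"
  have F: "i < length A \<and> A ! i = (ctype (a+c) (b+d), True) \<and> Wd (a+c) (b+d) = A[i := linv (A ! i)]"
    unfolding A_def i_def by (rule F2_list[OF det a b c d])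
  have copt: "coprime (a+c) (b+d)" using det_coprime[OF det] by simp
  have pt: "0 < a+c" "0 < b+d" using a b c d by auto
  have nn: "nat (a+c+(b+d)) = nat (a+b+c+d)" by (simp add: ac_simps)
  have tk: "take i A = take i (Wd (a+c) (b+d))" using F by simp
  have dr: "drop (Suc i) A = drop (Suc i) (Wd (a+c) (b+d))" using F by simp
  have pal0: "word_matrix k \<sigma> (take i (Wd (a+c) (b+d)) @ drop (Suc i) (Wd (a+c) (b+d))) = word_matrix k \<sigma> P3w"
    using palindrome[OF copt pt, of k \<sigma>] unfolding nn by (simp add: i_def)
  have pal: "word_matrix k \<sigma> (take i A @ drop (Suc i) A) = word_matrix k \<sigma> P3w"
    unfolding tk dr by (rule pal0)
  have "m2_add (word_matrix k \<sigma> A) (word_matrix k \<sigma> (A[i := linv (A!i)])) =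
         m2_smult (m2_tr (letter_matrix k \<sigma> (A!i))) (word_matrix k \<sigma> (take i A @ drop (Suc i) A))"
    using F by (intro word_flip_sum) simp
  then show ?thesis using F pal by (simp add: A_def word_matrix_append)
qed

lemma cc_p1: "0 \<le> m \<Longrightarrow> m \<le> Q \<Longrightarrow> cc 1 Q m = m"
  by (rule cc_unique) (simp_all add: algebra_simps)

lemma dd_p1: "0 \<le> m \<Longrightarrow> m \<le> Q \<Longrightarrow> dd 1 Q m = m"
  by (simp add: dd_def cc_p1 algebra_simps)

lemma left_rel:
  fixes n :: int
  assumes n: "1 \<le> n" and k: "3 \<le> k" "k < nat (2*(n+2))"
  shows "ltyp 1 (n+1) k = ltyp 1 n (k-2) \<and> lsig 1 (n+1) k = lsig 1 n (k-2) - 1"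
proof -
  define m where "m = int (k div 2)"
  have m1: "1 \<le> m" "m \<le> n+1" using k by (auto simp: m_def)
  have m2: "int ((k-2) div 2) = m - 1"
  proof -
    have "(k-2) div 2 = k div 2 - 1" using k by linarith
    then show ?thesis using k by (simp add: m_def of_nat_diff)
  qed
  have o2: "odd (k-2) = odd k" using k by simp
  show ?thesis
  proof (cases "odd k")
    case True
    have "lsig 1 (n+1) k = (1+(n+1)) - 2 * dd 1 (n+1) m" using True by (simp add: lsig_def m_def)
    also have "\<dots> = n + 2 - 2*m" using m1 by (simp add: dd_p1)
    finally have t: "lsig 1 (n+1) k = n + 2 - 2*m" .
    have "lsig 1 n (k-2) = (1+n) - 2 * dd 1 n (m-1)" using True o2 m2 by (simp add: lsig_def)
    also have "\<dots> = n + 3 - 2*m" using m1 by (simp add: dd_p1)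
    finally have y: "lsig 1 n (k-2) = n + 3 - 2*m" .
    show ?thesis using t y True o2 by (simp add: ltyp_def)
  next
    case False
    then have "k = 2*(k div 2)" by simp
    then have "2 \<le> k div 2" using k(1) by linarith
    then have m2': "2 \<le> m" by (simp add: m_def)
    have ct: "cc 1 (n+1) m = m" "cc 1 (n+1) (m-1) = m-1" using m1 m2' by (simp_all add: cc_p1)
    have cy: "cc 1 n (m-1) = m-1" "cc 1 n (m-1-1) = m-2" using m1 m2' by (simp_all add: cc_p1)
    have "lsig 1 (n+1) k = (n+1) - 2 * dd 1 (n+1) (m-1)" using False ct by (simp add: lsig_def m_def[symmetric])
    also have "\<dots> = n + 3 - 2*m" using m1 m2' by (simp add: dd_p1)
    finally have t: "lsig 1 (n+1) k = n + 3 - 2*m" .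
    have "lsig 1 n (k-2) = n - 2 * dd 1 n (m-1-1)" using False o2 m2 cy by (simp add: lsig_def)
    also have "\<dots> = n + 4 - 2*m" using m1 m2' by (simp add: dd_p1)
    finally have y: "lsig 1 n (k-2) = n + 4 - 2*m" .
    have "ltyp 1 (n+1) k = Vert" using False ct by (simp add: ltyp_def m_def[symmetric])
    moreover have "ltyp 1 n (k-2) = Vert" using False o2 m2 cy by (simp add: ltyp_def)
    ultimately show ?thesis using t y by simp
  qed
qed


lemma m2_adj_mult_det1: "m2_det A = 1 \<Longrightarrow> m2_mult (m2_adj A) A = m2_one"
  by (cases A) (simp add: m2_one_def algebra_simps)

lemma L_list:
  fixes n :: int
  assumes n: "1 \<le> n"
  defines "A \<equiv> P3w @ drop 1 (Wd 1 n)" and "i \<equiv> nat (n+2) + 1"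
  shows "i < length A \<and> A ! i = (ctype 1 (n+1), True) \<and> Wd 1 (n+1) = A[i := linv (A ! i)]"
proof -
  have copt: "coprime 1 (n+1)" by simp
  have pt: "(0::int) < 1" "0 < n+1" using n by auto
  have lA: "length A = nat (2*(1+(n+1)))" using n by (simp add: A_def)
  have cen: "lsig 1 (n+1) i = 0 \<and> ltyp 1 (n+1) i = ctype 1 (n+1)"
    using center[OF copt pt] by (simp add: i_def ctype_def add.commute)
  have main: "k < length A \<Longrightarrow> ltyp 1 (n+1) k = fst (A!k) \<and>
      (k = i \<longrightarrow> snd (A!k) \<and> lsig 1 (n+1) k = 0) \<and>
      (k \<noteq> i \<longrightarrow> (0 < lsig 1 (n+1) k) = snd (A!k))" for k
  proof -
    assume k: "k < length A"
    have nzt: "k \<noteq> i \<Longrightarrow> lsig 1 (n+1) k \<noteq> 0"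
      by (rule sig_nonzero[OF copt pt]) (use k lA in \<open>simp_all add: i_def add.commute\<close>)
    show ?thesis
    proof (cases "k < 3")
      case True
      have "A ! k = P3w ! k" unfolding A_def using True by (simp only: nth_append) simp
      moreover have "lett 1 (n+1) k = P3w ! k"
      proof -
        have "k = 0 \<or> k = 1 \<or> k = 2" using True by auto
        then show ?thesis using first_letters[OF pt] by auto
      qed
      ultimately have Ak: "A ! k = lett 1 (n+1) k" by simp
      have "k \<noteq> i" using True n by (simp add: i_def)
      then show ?thesis unfolding Ak by (simp add: lett_def)
    next
      case False
      have k2: "k - 2 < nat (2*(1+n))" using k lA False by simp
      have e: "1 + (k - 3) = k - 2" using False by simp
      have "A ! k = drop 1 (Wd 1 n) ! (k - 3)" using False by (simp add: A_def nth_append numeral_3_eq_3)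
      also have "\<dots> = Wd 1 n ! (1 + (k - 3))" using n by (intro nth_drop) simp
      also have "\<dots> = Wd 1 n ! (k - 2)" unfolding e ..
      also have "\<dots> = lett 1 n (k-2)" using k2 by simp
      finally have Ak: "A ! k = lett 1 n (k-2)" .
      have S: "ltyp 1 (n+1) k = ltyp 1 n (k-2) \<and> lsig 1 (n+1) k = lsig 1 n (k-2) - 1"
        by (rule left_rel) (use n False k lA in auto)
      have r2: "k \<noteq> i \<Longrightarrow> (0 < lsig 1 (n+1) k) = (0 < lsig 1 n (k-2))"
        using nzt S by auto
      show ?thesis using S cen r2 Ak by (auto simp: lett_def)
    qed
  qed
  have iA: "i < length A" using lA n by (simp add: i_def)
  have Ai: "A ! i = (ctype 1 (n+1), True)"
    using main[OF iA] cen by (cases "A ! i") auto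
  have "Wd 1 (n+1) = A[i := linv (A ! i)]"
  proof (rule nth_equalityI)
    show "length (Wd 1 (n+1)) = length (A[i := linv (A ! i)])" using lA by simp
  next
    fix k assume "k < length (Wd 1 (n+1))"
    then have k: "k < length A" using lA by (simp add: add.commute)
    then have Wk: "Wd 1 (n+1) ! k = lett 1 (n+1) k" using lA by (simp add: add.commute)
    show "Wd 1 (n+1) ! k = A[i := linv (A ! i)] ! k"
    proof (cases "k = i")
      case True
      then show ?thesis using Wk Ai iA cen by (simp add: lett_def linv_def)
    next
      case False
      then have "A[i := linv (A ! i)] ! k = A ! k" by simp
      then show ?thesis using main[OF k] Wk False by (cases "A ! k") (auto simp: lett_def)
    qed
  qed
  then show ?thesis using iA Ai by simp
qed

lemma L_matrix:
  fixes n :: int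
  assumes n: "1 \<le> n"
  shows "m2_add (m2_mult (word_matrix k \<sigma> (P3w @ [(Hor, False)])) (word_matrix k \<sigma> (Wd 1 n)))
                (word_matrix k \<sigma> (Wd 1 (n+1)))
       = m2_smult (m2_tr (letter_matrix k \<sigma> (ctype 1 (n+1), True))) (word_matrix k \<sigma> P3w)"
proof -
  define A where "A = P3w @ drop 1 (Wd 1 n)"
  define i where "i = nat (n+2) + 1"
  have F: "i < length A \<and> A ! i = (ctype 1 (n+1), True) \<and> Wd 1 (n+1) = A[i := linv (A ! i)]"
    unfolding A_def i_def by (rule L_list[OF n])
  have copt: "coprime 1 (n+1)" by simp
  have pt: "(0::int) < 1" "0 < n+1" using n by auto
  have Wy: "Wd 1 n = (Hor, True) # drop 1 (Wd 1 n)"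
  proof -
    have "0 < length (Wd 1 n)" using n by simp
    moreover have "Wd 1 n ! 0 = (Hor, True)" using first_letters[of 1 n] n by simp
    ultimately show ?thesis by (metis Cons_nth_drop_Suc One_nat_def drop0)
  qed
  have G: "m2_mult (word_matrix k \<sigma> (P3w @ [(Hor, False)])) (word_matrix k \<sigma> (Wd 1 n)) = word_matrix k \<sigma> A"
  proof -
    have "m2_mult (m2_adj (Xm k \<sigma>)) (m2_mult (Xm k \<sigma>) B) = B" for B
      by (simp add: m2_mult_assoc[symmetric] m2_adj_mult_det1 det_XYZ)
    then show ?thesis
      by (subst Wy) (simp add: A_def word_matrix_append m2_mult_assoc)
  qed
  have nn: "nat (1 + (n+1)) = nat (n+2)" by (simp add: ac_simps)
  have tk: "take i A = take i (Wd 1 (n+1))" using F by simp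
  have dr: "drop (Suc i) A = drop (Suc i) (Wd 1 (n+1))" using F by simp
  have pal0: "word_matrix k \<sigma> (take i (Wd 1 (n+1)) @ drop (Suc i) (Wd 1 (n+1))) = word_matrix k \<sigma> P3w"
    using palindrome[OF copt pt, of k \<sigma>] unfolding nn by (simp add: i_def)
  have pal: "word_matrix k \<sigma> (take i A @ drop (Suc i) A) = word_matrix k \<sigma> P3w"
    unfolding tk dr by (rule pal0)
  have "m2_add (word_matrix k \<sigma> A) (word_matrix k \<sigma> (A[i := linv (A!i)])) =
         m2_smult (m2_tr (letter_matrix k \<sigma> (A!i))) (word_matrix k \<sigma> (take i A @ drop (Suc i) A))"
    using F by (intro word_flip_sum) simp
  then show ?thesis using F pal G by simp
qed


definition cls :: "frac \<Rightarrow> nat" where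
  "cls x = (if even (fst x) then 1 else if even (snd x) then 3 else 2)"

definition Tmat :: "m2 \<Rightarrow> m2" where
  "Tmat A = m2_mult (M2 (-1) 0 0 1) (m2_mult A (M2 1 0 0 (-1)))"

definition Mc :: "(nat \<Rightarrow> int) \<Rightarrow> (nat \<Rightarrow> nat) \<Rightarrow> frac \<Rightarrow> m2" where
  "Mc k \<sigma> x = (if x = (0,1) then C01 k \<sigma> else Tmat (word_matrix k \<sigma> (Wd (int (fst x)) (int (snd x)))))"

lemma P3w_matrix: "word_matrix k \<sigma> P3w = M2 (-1) (3 + k (\<sigma> 1) + k (\<sigma> 2) + k (\<sigma> 3)) 0 (-1)"
  by (simp add: Xm_def Ym_def Zm_def m2_one_def algebra_simps)

lemma tr_ctype: "m2_tr (letter_matrix k \<sigma> (ctype (int p) (int q), True)) = - k (\<sigma> (cls (p,q)))"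
  by (simp add: ctype_def cls_def Xm_def Ym_def Zm_def even_of_nat_iff)

lemma Tstep:
  assumes "m2_add (m2_mult A B) C = m2_smult \<tau> (M2 (-1) K 0 (-1))"
  shows "Tmat C = m2_minus (m2_mult (Tmat A) (Tmat B)) (M2 (-\<tau>) (-\<tau>*K) 0 (-\<tau>))"
proof -
  obtain a1 a2 a3 a4 where A: "A = M2 a1 a2 a3 a4" by (cases A)
  obtain b1 b2 b3 b4 where B: "B = M2 b1 b2 b3 b4" by (cases B)
  obtain c1 c2 c3 c4 where C: "C = M2 c1 c2 c3 c4" by (cases C)
  show ?thesis using assms unfolding A B C Tmat_def by (simp add: algebra_simps)
qed

lemma Dmat_eq: "Kc k = 3 + k (\<sigma> 1) + k (\<sigma> 2) + k (\<sigma> 3) \<Longrightarrow>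
   M2 (-(- k j)) (-(- k j)*(3 + k (\<sigma> 1) + k (\<sigma> 2) + k (\<sigma> 3))) 0 (-(- k j)) = Dmat k j"
  by (simp add: Dmat_def algebra_simps)

lemma C01_word: "Kc k = 3 + k (\<sigma> 1) + k (\<sigma> 2) + k (\<sigma> 3) \<Longrightarrow>
   C01 k \<sigma> = Tmat (word_matrix k \<sigma> (P3w @ [(Hor, False)]))"
  by (simp add: C01_def Tmat_def Xm_def Ym_def Zm_def m2_one_def algebra_simps)

lemma step_matrix:
  fixes a b c d :: nat
  assumes hK: "Kc k = 3 + k (\<sigma> 1) + k (\<sigma> 2) + k (\<sigma> 3)"
    and det: "int b * int c = int a * int d + 1" and b: "1 \<le> b" and c: "1 \<le> c" and d: "1 \<le> d \<or> (a,b) \<noteq> (0,1)"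
  shows "Mc k \<sigma> (a+c, b+d) = m2_minus (m2_mult (Mc k \<sigma> (a,b)) (Mc k \<sigma> (c,d))) (Dmat k (\<sigma> (cls (a+c, b+d))))"
proof (cases "(a,b) = (0,1)")
  case True
  then have ab: "a = 0" "b = 1" by auto
  then have c1: "c = 1" using det by simp
  have d1: "1 \<le> d" using d True by auto
  have L: "m2_add (m2_mult (word_matrix k \<sigma> (P3w @ [(Hor, False)])) (word_matrix k \<sigma> (Wd 1 (int d))))
                (word_matrix k \<sigma> (Wd 1 (int d+1)))
       = m2_smult (m2_tr (letter_matrix k \<sigma> (ctype 1 (int d+1), True))) (word_matrix k \<sigma> P3w)"
    by (rule L_matrix) (use d1 in simp)
  have tr: "m2_tr (letter_matrix k \<sigma> (ctype 1 (int d+1), True)) = - k (\<sigma> (cls (1, d+1)))"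
    using tr_ctype[of k \<sigma> 1 "d+1"] by (simp add: add.commute)
  have "Tmat (word_matrix k \<sigma> (Wd 1 (int d+1))) =
    m2_minus (m2_mult (Tmat (word_matrix k \<sigma> (P3w @ [(Hor, False)]))) (Tmat (word_matrix k \<sigma> (Wd 1 (int d)))))
      (Dmat k (\<sigma> (cls (1, d+1))))"
    using Tstep[OF L[unfolded tr P3w_matrix]] Dmat_eq[OF hK] by simp
  then show ?thesis using ab c1 C01_word[OF hK] by (simp add: Mc_def add.commute)
next
  case False
  have a: "1 \<le> a"
  proof (rule ccontr)
    assume "\<not> 1 \<le> a" then have "a = 0" by simp
    then have "int (b*c) = 1" using det by simp
    then have "b*c = 1" by linarith
    then have "b = 1" by simp
    then show False using False \<open>a = 0\<close> by simp
  qed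
  have F: "m2_add (m2_mult (word_matrix k \<sigma> (Wd (int a) (int b))) (word_matrix k \<sigma> (Wd (int c) (int d))))
                (word_matrix k \<sigma> (Wd (int a + int c) (int b + int d)))
       = m2_smult (m2_tr (letter_matrix k \<sigma> (ctype (int a + int c) (int b + int d), True))) (word_matrix k \<sigma> P3w)"
    by (rule F2_matrix) (use det a b c in auto)
  have tr: "m2_tr (letter_matrix k \<sigma> (ctype (int a + int c) (int b + int d), True)) = - k (\<sigma> (cls (a+c, b+d)))"
    using tr_ctype[of k \<sigma> "a+c" "b+d"] by simp
  have "Tmat (word_matrix k \<sigma> (Wd (int a + int c) (int b + int d))) =
    m2_minus (m2_mult (Tmat (word_matrix k \<sigma> (Wd (int a) (int b)))) (Tmat (word_matrix k \<sigma> (Wd (int c) (int d)))))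
      (Dmat k (\<sigma> (cls (a+c, b+d))))"
    using Tstep[OF F[unfolded tr P3w_matrix]] Dmat_eq[OF hK] by simp
  moreover have "Mc k \<sigma> (a,b) = Tmat (word_matrix k \<sigma> (Wd (int a) (int b)))"
    using False unfolding Mc_def by (simp only: if_False fst_conv snd_conv)
  moreover have "Mc k \<sigma> (c,d) = Tmat (word_matrix k \<sigma> (Wd (int c) (int d)))"
    using c by (simp add: Mc_def)
  moreover have "Mc k \<sigma> (a+c,b+d) = Tmat (word_matrix k \<sigma> (Wd (int a + int c) (int b + int d)))"
    using c by (simp add: Mc_def)
  ultimately show ?thesis by simp
qed


lemma Wd_11: "Wd 1 1 = [(Hor,True),(Diag,True),(Vert,True),(Diag,False)]"
  by (simp add: Wd_def lett_def ltyp_def lsig_def dd_def cc_def upt_rec)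

lemma Wd_10: "Wd 1 0 = [(Hor,True),(Diag,True)]"
  by (simp add: Wd_def lett_def ltyp_def lsig_def dd_def cc_def upt_rec)

lemma base_C11: "Kc k = 3 + k (\<sigma> 1) + k (\<sigma> 2) + k (\<sigma> 3) \<Longrightarrow> C11 k \<sigma> = Mc k \<sigma> (1,1)"
  by (simp add: Mc_def Wd_11 C11_def Tmat_def Xm_def Ym_def Zm_def m2_one_def algebra_simps)

lemma base_C10: "Kc k = 3 + k (\<sigma> 1) + k (\<sigma> 2) + k (\<sigma> 3) \<Longrightarrow> C10 k \<sigma> = Mc k \<sigma> (1,0)"
  by (simp add: Mc_def Wd_10 C10_def Tmat_def Xm_def Ym_def Zm_def m2_one_def algebra_simps)

definition Inv :: "(nat \<Rightarrow> int) \<Rightarrow> (nat \<Rightarrow> nat) \<Rightarrow> bool list \<Rightarrow> bool" where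
  "Inv k \<sigma> w = (case farey_vertex w of (r, t, s) \<Rightarrow>
     int (snd r) * int (fst s) = int (fst r) * int (snd s) + 1 \<and> t = mediant r s \<and>
     1 \<le> snd r \<and> 1 \<le> fst s \<and>
     snd (fst (gm_vertex k \<sigma> w)) = \<sigma> (cls r) \<and>
     snd (fst (snd (gm_vertex k \<sigma> w))) = \<sigma> (cls t) \<and>
     snd (snd (snd (gm_vertex k \<sigma> w))) = \<sigma> (cls s) \<and>
     cohn_vertex k \<sigma> w = (Mc k \<sigma> r, Mc k \<sigma> t, Mc k \<sigma> s))"

lemma cls_parity: "cls (2*a + c, 2*b + d) = cls (c, d)"
  by (simp add: cls_def)

lemma tree_inv:
  assumes hK: "Kc k = 3 + k (\<sigma> 1) + k (\<sigma> 2) + k (\<sigma> 3)"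
  shows "Inv k \<sigma> w"
proof (induction w)
  case Nil
  show ?case using base_C11[OF hK] base_C10[OF hK]
    by (simp add: Inv_def mediant_def cls_def Mc_def)
next
  case (Cons dir w)
  obtain a b c d where rs: "fst (farey_vertex w) = (a,b)" "snd (snd (farey_vertex w)) = (c,d)"
    by (metis prod.exhaust)
  obtain m1 h m2 i m3 j where g: "gm_vertex k \<sigma> w = ((m1,h),(m2,i),(m3,j))"
    by (metis prod.exhaust)
  have fv: "farey_vertex w = ((a,b), (a+c, b+d), (c,d))" and
    det: "int b * int c = int a * int d + 1" and b1: "1 \<le> b" and c1: "1 \<le> c" and
    lh: "h = \<sigma> (cls (a,b))" and li: "i = \<sigma> (cls (a+c,b+d))" and lj: "j = \<sigma> (cls (c,d))" and
    cv: "cohn_vertex k \<sigma> w = (Mc k \<sigma> (a,b), Mc k \<sigma> (a+c,b+d), Mc k \<sigma> (c,d))"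
    using Cons.IH rs g by (auto simp: Inv_def mediant_def split: prod.splits)
  show ?case
  proof (cases dir)
    case True
    have det2: "int b * int (a+c) = int a * int (b+d) + 1" using det by (simp add: algebra_simps)
    have st: "Mc k \<sigma> (a+(a+c), b+(b+d)) = m2_minus (m2_mult (Mc k \<sigma> (a,b)) (Mc k \<sigma> (a+c,b+d)))
        (Dmat k (\<sigma> (cls (a+(a+c), b+(b+d)))))"
      by (rule step_matrix[OF hK det2 b1]) (use c1 in auto)
    have cl: "cls (a+(a+c), b+(b+d)) = cls (c,d)"
    proof -
      have e: "a+(a+c) = 2*a+c" "b+(b+d) = 2*b+d" by simp_all
      show ?thesis unfolding e by (rule cls_parity)
    qed
    show ?thesis using True fv g cv st cl det2 b1 c1 lh li lj
      by (simp add: Inv_def mediant_def)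
  next
    case False
    have det2: "int (b+d) * int c = int (a+c) * int d + 1" using det by (simp add: algebra_simps)
    have b2: "1 \<le> b+d" using b1 by simp
    have st: "Mc k \<sigma> ((a+c)+c, (b+d)+d) = m2_minus (m2_mult (Mc k \<sigma> (a+c,b+d)) (Mc k \<sigma> (c,d)))
        (Dmat k (\<sigma> (cls ((a+c)+c, (b+d)+d))))"
      by (rule step_matrix[OF hK det2 b2 c1]) (use c1 in auto)
    have cl: "cls ((a+c)+c, (b+d)+d) = cls (a,b)"
    proof -
      have e: "(a+c)+c = 2*c+a" "(b+d)+d = 2*d+b" by simp_all
      show ?thesis unfolding e by (rule cls_parity)
    qed
    show ?thesis using False fv g cv st cl det2 b2 c1 lh li lj
      by (simp add: Inv_def mediant_def)
  qed
qed


definition FInv :: "bool list \<Rightarrow> bool" where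
  "FInv w = (case farey_vertex w of (r, t, s) \<Rightarrow>
     int (snd r) * int (fst s) = int (fst r) * int (snd s) + 1 \<and> t = mediant r s \<and>
     1 \<le> snd r \<and> 1 \<le> fst s)"

lemma farey_inv: "FInv w"
proof (induction w)
  case Nil then show ?case by (simp add: FInv_def mediant_def)
next
  case (Cons dir w)
  obtain a b c d where rs: "fst (farey_vertex w) = (a,b)" "snd (snd (farey_vertex w)) = (c,d)"
    by (metis prod.exhaust)
  have fv: "farey_vertex w = ((a,b), (a+c, b+d), (c,d))" and
    det: "int b * int c = int a * int d + 1" and b1: "1 \<le> b" and c1: "1 \<le> c"
    using Cons.IH rs by (auto simp: FInv_def mediant_def split: prod.splits)
  show ?case using fv det b1 c1 by (cases dir) (auto simp: FInv_def mediant_def algebra_simps)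
qed

lemma nat_coprime_eq:
  fixes p q a b :: nat
  assumes "coprime p q" "coprime a b" "b*p = a*q" "0 < p"
  shows "p = a \<and> q = b"
proof -
  have "p dvd a*q" using assms(3) by (metis dvd_triv_right)
  then have pa: "p dvd a" using assms(1) by (simp add: coprime_dvd_mult_left_iff)
  have "a dvd b*p" using assms(3) by simp
  then have ap: "a dvd p" using assms(2) by (simp add: coprime_commute coprime_dvd_mult_right_iff)
  have "p = a" using pa ap by (simp add: dvd_antisym)
  then show ?thesis using assms(3,4) by simp
qed

lemma exists_vertex:
  fixes p q :: nat
  assumes cop: "coprime p q" and p: "0 < p" and q: "0 < q"
  shows "\<exists>w. fst (snd (farey_vertex w)) = (p,q)"
proof -
  have main: "\<And>w. m = p + q - (fst (fst (snd (farey_vertex w))) + snd (fst (snd (farey_vertex w)))) \<Longrightarrow>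
     int (snd (fst (farey_vertex w))) * int p > int (fst (fst (farey_vertex w))) * int q \<Longrightarrow>
     int (fst (snd (snd (farey_vertex w)))) * int q > int (snd (snd (snd (farey_vertex w)))) * int p \<Longrightarrow>
     \<exists>w'. fst (snd (farey_vertex w')) = (p,q)" for m
  proof (induction m rule: less_induct)
    case (less m w)
    obtain a b c d where rs: "fst (farey_vertex w) = (a,b)" "snd (snd (farey_vertex w)) = (c,d)"
      by (metis prod.exhaust)
    have fv: "farey_vertex w = ((a,b), (a+c, b+d), (c,d))" and
      det: "int b * int c = int a * int d + 1" and b1: "1 \<le> b" and c1: "1 \<le> c"
      using farey_inv[of w] rs by (auto simp: FInv_def mediant_def split: prod.splits)
    define u where "u = int b * int p - int a * int q"
    define v where "v = int c * int q - int d * int p"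
    have u1: "1 \<le> u" "1 \<le> v" using less.prems fv by (simp_all add: u_def v_def)
    have pe: "int p = u * int c + v * int a" "int q = u * int d + v * int b"
    proof -
      have "u * int c + v * int a = int p * (int b * int c - int a * int d)"
        by (simp add: u_def v_def algebra_simps)
      then show "int p = u * int c + v * int a" using det by simp
      have "u * int d + v * int b = int q * (int b * int c - int a * int d)"
        by (simp add: u_def v_def algebra_simps)
      then show "int q = u * int d + v * int b" using det by simp
    qed
    have pge: "a + c \<le> p" "b + d \<le> q"
    proof -
      have "int c \<le> u * int c" "int a \<le> v * int a" "int d \<le> u * int d" "int b \<le> v * int b"
        using u1 mult_right_mono[of 1 u "int c"] mult_right_mono[of 1 v "int a"]
          mult_right_mono[of 1 u "int d"] mult_right_mono[of 1 v "int b"] by simp_all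
      then show "a + c \<le> p" "b + d \<le> q" using pe by linarith+
    qed
    show ?case
    proof (cases "(a+c, b+d) = (p,q)")
      case True
      then have "fst (snd (farey_vertex w)) = (p,q)" using fv by simp
      then show ?thesis by blast
    next
      case False
      have copt: "coprime (a+c) (b+d)"
      proof -
        have "coprime (int a + int c) (int b + int d)"
          using det_coprime(3)[OF det] .
        then show ?thesis by (simp only: of_nat_add[symmetric] coprime_int_iff)
      qed
      have ne: "int (b+d) * int p \<noteq> int (a+c) * int q"
      proof
        assume "int (b+d) * int p = int (a+c) * int q"
        then have "int ((b+d) * p) = int ((a+c) * q)" by (simp only: of_nat_mult)
        then have "(b+d) * p = (a+c) * q" by (simp only: of_nat_eq_iff)
        then have "p = a+c \<and> q = b+d" using nat_coprime_eq[OF cop copt] p by simp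
        then show False using False by simp
      qed
      consider "int (b+d) * int p > int (a+c) * int q" | "int (b+d) * int p < int (a+c) * int q"
        using ne by linarith
      then show ?thesis
      proof cases
        case 1
        let ?w = "False # w"
        have fv2: "farey_vertex ?w = ((a+c,b+d), (a+c+c, b+d+d), (c,d))"
          using fv by (simp add: mediant_def)
        have "a+c+c \<le> p \<and> b+d+d \<le> q \<or> (a+c+c, b+d+d) = (p,q)"
        proof -
          define u' where "u' = int (b+d) * int p - int (a+c) * int q"
          have "1 \<le> u'" using 1 by (simp add: u'_def)
          have det2: "int (b+d) * int c = int (a+c) * int d + 1" using det by (simp add: algebra_simps)
          have "u' * int c + v * int (a+c) = int p * (int (b+d) * int c - int (a+c) * int d)"
            by (simp add: u'_def v_def algebra_simps)
          then have "int p = u' * int c + v * int (a+c)" using det2 by simp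
          moreover have "u' * int d + v * int (b+d) = int q * (int (b+d) * int c - int (a+c) * int d)"
            by (simp add: u'_def v_def algebra_simps)
          then have "int q = u' * int d + v * int (b+d)" using det2 by simp
          moreover have "int c \<le> u' * int c" "int (a+c) \<le> v * int (a+c)" "int d \<le> u' * int d" "int (b+d) \<le> v * int (b+d)"
            using u1 \<open>1 \<le> u'\<close> mult_right_mono[of 1 u' "int c"] mult_right_mono[of 1 v "int (a+c)"]
              mult_right_mono[of 1 u' "int d"] mult_right_mono[of 1 v "int (b+d)"] by simp_all
          ultimately show ?thesis by simp
        qed
        then have lt: "p + q - (a+c+c + (b+d+d)) < m" using less.prems(1) fv c1 pge by auto
        show ?thesis
          by (rule less.IH[OF lt, of ?w]) (use fv2 fv 1 less.prems in simp_all)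
      next
        case 2
        let ?w = "True # w"
        have fv2: "farey_vertex ?w = ((a,b), (a+(a+c), b+(b+d)), (a+c,b+d))"
          using fv by (simp add: mediant_def)
        have "a+(a+c) \<le> p \<and> b+(b+d) \<le> q"
        proof -
          define v' where "v' = int (a+c) * int q - int (b+d) * int p"
          have "1 \<le> v'" using 2 by (simp add: v'_def)
          have det2: "int b * int (a+c) = int a * int (b+d) + 1" using det by (simp add: algebra_simps)
          have "u * int (a+c) + v' * int a = int p * (int b * int (a+c) - int a * int (b+d))"
            by (simp add: u_def v'_def algebra_simps)
          then have "int p = u * int (a+c) + v' * int a" using det2 by simp
          moreover have "u * int (b+d) + v' * int b = int q * (int b * int (a+c) - int a * int (b+d))"
            by (simp add: u_def v'_def algebra_simps)
          then have "int q = u * int (b+d) + v' * int b" using det2 by simp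
          moreover have "int (a+c) \<le> u * int (a+c)" "int a \<le> v' * int a" "int (b+d) \<le> u * int (b+d)" "int b \<le> v' * int b"
            using u1 \<open>1 \<le> v'\<close> mult_right_mono[of 1 u "int (a+c)"] mult_right_mono[of 1 v' "int a"]
              mult_right_mono[of 1 u "int (b+d)"] mult_right_mono[of 1 v' "int b"] by simp_all
          ultimately show ?thesis by simp
        qed
        then have lt: "p + q - (a+(a+c) + (b+(b+d))) < m" using less.prems(1) fv b1 pge by auto
        show ?thesis
          by (rule less.IH[OF lt, of ?w]) (use fv2 fv 2 less.prems in simp_all)
      qed
    qed
  qed
  show ?thesis by (rule main[of _ "[]"]) (use p q in simp_all)
qed


lemma hK_perm:
  assumes "\<sigma> permutes {1, 2, 3}"
  shows "Kc (kfun k1 k2 k3) = 3 + kfun k1 k2 k3 (\<sigma> 1) + kfun k1 k2 k3 (\<sigma> 2) + kfun k1 k2 k3 (\<sigma> 3)"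
proof -
  let ?f = "kfun k1 k2 k3"
  have "(\<Sum>i\<in>{1,2,3::nat}. ?f (\<sigma> i)) = (\<Sum>i\<in>\<sigma> ` {1,2,3}. ?f i)"
    using sum.reindex[OF permutes_inj_on[OF assms], of ?f "{1,2,3}"] by (simp add: comp_def)
  also have "\<sigma> ` {1,2,3} = {1,2,3}" using permutes_image[OF assms] .
  finally have e: "(\<Sum>i\<in>{1,2,3::nat}. ?f (\<sigma> i)) = (\<Sum>i\<in>{1,2,3::nat}. ?f i)" .
  have "\<sigma> 1 \<noteq> \<sigma> 2" "\<sigma> 1 \<noteq> \<sigma> 3" "\<sigma> 2 \<noteq> \<sigma> 3"
    using permutes_inj[OF assms] by (simp_all add: inj_eq)
  then have "(\<Sum>i\<in>{1,2,3::nat}. ?f (\<sigma> i)) = ?f (\<sigma> 1) + ?f (\<sigma> 2) + ?f (\<sigma> 3)" by simp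
  moreover have "(\<Sum>i\<in>{1,2,3::nat}. ?f i) = ?f 1 + ?f 2 + ?f 3" by simp
  ultimately show ?thesis using e by (simp add: Kc_def kfun_def)
qed



lemma small_add_le: "0 < (\<delta>::real) \<Longrightarrow> \<delta> < 1 \<Longrightarrow> (real_of_int A + \<delta> \<le> real_of_int B) \<longleftrightarrow> A < B"
proof
  assume "0 < \<delta>" "\<delta> < 1" "real_of_int A + \<delta> \<le> real_of_int B"
  then have "real_of_int A < real_of_int B" by linarith
  then show "A < B" by simp
next
  assume d: "0 < \<delta>" "\<delta> < 1" and "A < B"
  then have "A + 1 \<le> B" by simp
  then have "real_of_int A + 1 \<le> real_of_int B" by linarith
  then show "real_of_int A + \<delta> \<le> real_of_int B" using d by linarith
qed

lemma small_le_add: "0 < (\<delta>::real) \<Longrightarrow> \<delta> < 1 \<Longrightarrow> (real_of_int A \<le> real_of_int B + \<delta>) \<longleftrightarrow> A \<le> B"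
proof
  assume d: "0 < \<delta>" "\<delta> < 1" "real_of_int A \<le> real_of_int B + \<delta>"
  then have "real_of_int A < real_of_int (B + 1)" by simp
  then have "A < B + 1" by linarith
  then show "A \<le> B" by simp
next
  assume d: "0 < \<delta>" "\<delta> < 1" and "A \<le> B"
  then have "real_of_int A \<le> real_of_int B" by simp
  then show "real_of_int A \<le> real_of_int B + \<delta>" using d by linarith
qed

lemma small_add_lt: "0 < (\<delta>::real) \<Longrightarrow> \<delta> < 1 \<Longrightarrow> (real_of_int A + \<delta> < real_of_int B) \<longleftrightarrow> A < B"
proof
  assume "0 < \<delta>" "\<delta> < 1" "real_of_int A + \<delta> < real_of_int B"
  then have "real_of_int A < real_of_int B" by linarith
  then show "A < B" by simp
next
  assume d: "0 < \<delta>" "\<delta> < 1" and "A < B"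
  then have "A + 1 \<le> B" by simp
  then have "real_of_int A + 1 \<le> real_of_int B" by linarith
  then show "real_of_int A + \<delta> < real_of_int B" using d by linarith
qed

lemma small_lt_add: "0 < (\<delta>::real) \<Longrightarrow> \<delta> < 1 \<Longrightarrow> (real_of_int A < real_of_int B + \<delta>) \<longleftrightarrow> A \<le> B"
proof
  assume d: "0 < \<delta>" "\<delta> < 1" "real_of_int A < real_of_int B + \<delta>"
  then have "real_of_int A < real_of_int (B + 1)" by simp
  then have "A < B + 1" by linarith
  then show "A \<le> B" by simp
next
  assume d: "0 < \<delta>" "\<delta> < 1" and "A \<le> B"
  then have "real_of_int A \<le> real_of_int B" by simp
  then show "real_of_int A < real_of_int B + \<delta>" using d by linarith
qed

lemma seg_hor: "(\<exists>u\<in>{0..1::real}. (X, Y) = ((1-u)*x + u*(x+1), (1-u)*y + u*y)) \<longleftrightarrow> Y = y \<and> x \<le> X \<and> X \<le> x + 1"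
proof
  assume "\<exists>u\<in>{0..1::real}. (X, Y) = ((1-u)*x + u*(x+1), (1-u)*y + u*y)"
  then obtain u where "u \<in> {0..1}" "X = x + u" "Y = y" by (auto simp: algebra_simps)
  then show "Y = y \<and> x \<le> X \<and> X \<le> x + 1" by auto
next
  assume h: "Y = y \<and> x \<le> X \<and> X \<le> x + 1"
  show "\<exists>u\<in>{0..1::real}. (X, Y) = ((1-u)*x + u*(x+1), (1-u)*y + u*y)"
    by (rule bexI[of _ "X - x"]) (use h in \<open>auto simp: algebra_simps\<close>)
qed

lemma seg_vert: "(\<exists>u\<in>{0..1::real}. (X, Y) = ((1-u)*x + u*x, (1-u)*y + u*(y+1))) \<longleftrightarrow> X = x \<and> y \<le> Y \<and> Y \<le> y + 1"
proof
  assume "\<exists>u\<in>{0..1::real}. (X, Y) = ((1-u)*x + u*x, (1-u)*y + u*(y+1))"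
  then obtain u where "u \<in> {0..1}" "Y = y + u" "X = x" by (auto simp: algebra_simps)
  then show "X = x \<and> y \<le> Y \<and> Y \<le> y + 1" by auto
next
  assume h: "X = x \<and> y \<le> Y \<and> Y \<le> y + 1"
  show "\<exists>u\<in>{0..1::real}. (X, Y) = ((1-u)*x + u*x, (1-u)*y + u*(y+1))"
    by (rule bexI[of _ "Y - y"]) (use h in \<open>auto simp: algebra_simps\<close>)
qed

lemma seg_diag: "(\<exists>u\<in>{0..1::real}. (X, Y) = ((1-u)*x + u*(x+1), (1-u)*(y+1) + u*y)) \<longleftrightarrow> X + Y = x + y + 1 \<and> x \<le> X \<and> X \<le> x + 1"
proof
  assume "\<exists>u\<in>{0..1::real}. (X, Y) = ((1-u)*x + u*(x+1), (1-u)*(y+1) + u*y)"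
  then obtain u where "u \<in> {0..1}" "X = x + u" "Y = y + 1 - u" by (auto simp: algebra_simps)
  then show "X + Y = x + y + 1 \<and> x \<le> X \<and> X \<le> x + 1" by auto
next
  assume h: "X + Y = x + y + 1 \<and> x \<le> X \<and> X \<le> x + 1"
  show "\<exists>u\<in>{0..1::real}. (X, Y) = ((1-u)*x + u*(x+1), (1-u)*(y+1) + u*y)"
    by (rule bexI[of _ "X - x"]) (use h in \<open>auto simp: algebra_simps\<close>)
qed


fun icond :: "int \<Rightarrow> int \<Rightarrow> edge \<Rightarrow> bool" where
  "icond p q (Hor, i, j) = (0 \<le> j \<and> j < p \<and> p*i < j*q \<and> j*q \<le> p*(i+1))"
| "icond p q (Vert, i, j) = (0 \<le> i \<and> i < q \<and> q*j \<le> i*p \<and> i*p < q*(j+1))"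
| "icond p q (Diag, i, j) = (0 \<le> i+j+1 \<and> i+j+1 < p+q \<and> i*(p+q) < (i+j+1)*q \<and> (i+j+1)*q \<le> (i+1)*(p+q))"

fun epar :: "nat \<Rightarrow> nat \<Rightarrow> real \<Rightarrow> edge \<Rightarrow> real" where
  "epar p q \<epsilon> (Hor, i, j) = of_int j / real p"
| "epar p q \<epsilon> (Vert, i, j) = (of_int i + \<epsilon>) / real q"
| "epar p q \<epsilon> (Diag, i, j) = (of_int (i + j + 1) + \<epsilon>) / real (p + q)"

lemma cross_hor:
  assumes p: "1 \<le> p" and q: "1 \<le> q" and e: "0 < \<epsilon>" "2 * real p * \<epsilon> < 1"
  shows "crosses_at p q \<epsilon> (Hor, i, j) s \<longleftrightarrow> s = epar p q \<epsilon> (Hor, i, j) \<and> icond (int p) (int q) (Hor, i, j)"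
proof -
  define P where "P = real p"
  define Q where "Q = real q"
  have P0: "0 < P" "0 < Q" using p q by (simp_all add: P_def Q_def)
  have d: "0 < P*\<epsilon>" "P*\<epsilon> < 1" using e P0 by (simp_all add: P_def)
  have A: "crosses_at p q \<epsilon> (Hor, i, j) s \<longleftrightarrow>
      0 \<le> s \<and> s < 1 \<and> s*P = of_int j \<and> of_int i \<le> -\<epsilon> + s*Q \<and> -\<epsilon> + s*Q \<le> of_int i + 1"
    unfolding crosses_at_def seg_point_def using seg_hor[of "-\<epsilon> + s * real q" "s * real p" "of_int i" "of_int j"]
    by (simp add: P_def Q_def)
  have 1: "P * of_int i + P*\<epsilon> \<le> of_int j * Q \<longleftrightarrow> int p * i < j * int q"
  proof -
    have "P * of_int i + P*\<epsilon> \<le> of_int j * Q \<longleftrightarrow> real_of_int (int p * i) + P*\<epsilon> \<le> real_of_int (j * int q)"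
      by (simp add: P_def Q_def)
    also have "\<dots> \<longleftrightarrow> int p * i < j * int q" by (rule small_add_le[OF d])
    finally show ?thesis .
  qed
  have 2: "of_int j * Q \<le> P * (of_int i + 1) + P*\<epsilon> \<longleftrightarrow> j * int q \<le> int p * (i+1)"
  proof -
    have "of_int j * Q \<le> P * (of_int i + 1) + P*\<epsilon> \<longleftrightarrow> real_of_int (j * int q) \<le> real_of_int (int p * (i+1)) + P*\<epsilon>"
      by (simp add: P_def Q_def)
    also have "\<dots> \<longleftrightarrow> j * int q \<le> int p * (i+1)" by (rule small_le_add[OF d])
    finally show ?thesis .
  qed
  have ex: "P*(-\<epsilon> + s*Q) = -(P*\<epsilon>) + P*(s*Q)" "P*(of_int i + 1) = P * of_int i + P"
    by (simp_all add: algebra_simps)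
  show ?thesis
  proof
    assume H: "crosses_at p q \<epsilon> (Hor, i, j) s"
    then have h: "0 \<le> s" "s < 1" "s*P = of_int j" "of_int i \<le> -\<epsilon> + s*Q" "-\<epsilon> + s*Q \<le> of_int i + 1"
      using A by auto
    have sj: "s = of_int j / P" using h(3) P0 by (simp add: eq_divide_eq)
    have sq: "P*(s*Q) = of_int j * Q" using h(3) by (metis mult.assoc mult.commute)
    have "0 \<le> s*P" using h(1) P0 by simp
    then have j0: "0 \<le> j" using h(3) by simp
    have "s*P < 1*P" using h(2) P0 by (intro mult_strict_right_mono) auto
    then have j1: "j < int p" using h(3) by (simp add: P_def)
    have "P * (of_int i) \<le> P * (-\<epsilon> + s*Q)" using h(4) P0 by (intro mult_left_mono) auto
    then have "P * of_int i + P*\<epsilon> \<le> of_int j * Q" using sq ex by linarith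
    then have c1: "int p * i < j * int q" using 1 by simp
    have "P * (-\<epsilon> + s*Q) \<le> P * (of_int i + 1)" using h(5) P0 by (intro mult_left_mono) auto
    then have "of_int j * Q \<le> P * (of_int i + 1) + P*\<epsilon>" using sq ex by linarith
    then have c2: "j * int q \<le> int p * (i+1)" using 2 by simp
    show "s = epar p q \<epsilon> (Hor, i, j) \<and> icond (int p) (int q) (Hor, i, j)"
      using sj j0 j1 c1 c2 by (simp add: P_def)
  next
    assume H: "s = epar p q \<epsilon> (Hor, i, j) \<and> icond (int p) (int q) (Hor, i, j)"
    then have sj: "s = of_int j / P" and j0: "0 \<le> j" and j1: "j < int p"
      and c1: "int p * i < j * int q" and c2: "j * int q \<le> int p * (i+1)" by (auto simp: P_def)
    have sP: "s*P = of_int j" using sj P0 by simp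
    have sq: "P*(s*Q) = of_int j * Q" using sP by (metis mult.assoc mult.commute)
    have "0 \<le> s" using sj j0 P0 by simp
    moreover have "s < 1" using sj j1 P0 by (simp add: divide_less_eq P_def)
    moreover have "P * (of_int i) \<le> P * (-\<epsilon> + s*Q)"
      using c1 1 sq ex by linarith
    then have "of_int i \<le> -\<epsilon> + s*Q" using P0 by simp
    moreover have "P * (-\<epsilon> + s*Q) \<le> P * (of_int i + 1)"
      using c2 2 sq ex by linarith
    then have "-\<epsilon> + s*Q \<le> of_int i + 1" using P0 by simp
    ultimately show "crosses_at p q \<epsilon> (Hor, i, j) s" using A sP by simp
  qed
qed


lemma cross_vert:
  assumes p: "1 \<le> p" and q: "1 \<le> q" and e: "0 < \<epsilon>" "2 * real p * \<epsilon> < 1"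
  shows "crosses_at p q \<epsilon> (Vert, i, j) s \<longleftrightarrow> s = epar p q \<epsilon> (Vert, i, j) \<and> icond (int p) (int q) (Vert, i, j)"
proof -
  define P where "P = real p"
  define Q where "Q = real q"
  have P0: "0 < P" "0 < Q" "1 \<le> P" using p q by (simp_all add: P_def Q_def)
  have d: "0 < P*\<epsilon>" "P*\<epsilon> < 1" using e P0 by (simp_all add: P_def)
  have e1: "\<epsilon> < 1"
  proof -
    have "\<epsilon> \<le> P*\<epsilon>" using P0 e by simp
    then show ?thesis using d by simp
  qed
  have A: "crosses_at p q \<epsilon> (Vert, i, j) s \<longleftrightarrow>
      0 \<le> s \<and> s < 1 \<and> -\<epsilon> + s*Q = of_int i \<and> of_int j \<le> s*P \<and> s*P \<le> of_int j + 1"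
    unfolding crosses_at_def seg_point_def using seg_vert[of "-\<epsilon> + s * real q" "s * real p" "of_int i" "of_int j"]
    by (simp add: P_def Q_def)
  have 1: "Q * of_int j \<le> P * of_int i + P*\<epsilon> \<longleftrightarrow> int q * j \<le> i * int p"
  proof -
    have "Q * of_int j \<le> P * of_int i + P*\<epsilon> \<longleftrightarrow> real_of_int (int q * j) \<le> real_of_int (i * int p) + P*\<epsilon>"
      by (simp add: P_def Q_def mult.commute)
    also have "\<dots> \<longleftrightarrow> int q * j \<le> i * int p" by (rule small_le_add[OF d])
    finally show ?thesis .
  qed
  have 2: "P * of_int i + P*\<epsilon> \<le> Q * (of_int j + 1) \<longleftrightarrow> i * int p < int q * (j+1)"
  proof -
    have "P * of_int i + P*\<epsilon> \<le> Q * (of_int j + 1) \<longleftrightarrow> real_of_int (i * int p) + P*\<epsilon> \<le> real_of_int (int q * (j+1))"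
      by (simp add: P_def Q_def mult.commute)
    also have "\<dots> \<longleftrightarrow> i * int p < int q * (j+1)" by (rule small_add_le[OF d])
    finally show ?thesis .
  qed
  have 3: "0 \<le> of_int i + \<epsilon> \<longleftrightarrow> 0 \<le> i"
  proof
    assume a: "0 \<le> of_int i + \<epsilon>"
    show "0 \<le> i"
    proof (rule ccontr)
      assume "\<not> 0 \<le> i"
      then have "i \<le> -1" by simp
      then have "real_of_int i \<le> -1" by simp
      then show False using a e1 by linarith
    qed
  next
    assume "0 \<le> i" then show "0 \<le> of_int i + \<epsilon>" using e by simp
  qed
  have 4: "of_int i + \<epsilon> < Q \<longleftrightarrow> i < int q"
  proof -
    have "of_int i + \<epsilon> < Q \<longleftrightarrow> real_of_int i + \<epsilon> < real_of_int (int q)" by (simp add: Q_def)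
    also have "\<dots> \<longleftrightarrow> i < int q" by (rule small_add_lt[OF e(1) e1])
    finally show ?thesis .
  qed
  show ?thesis
  proof
    assume H: "crosses_at p q \<epsilon> (Vert, i, j) s"
    then have h: "0 \<le> s" "s < 1" "s*Q = of_int i + \<epsilon>" "of_int j \<le> s*P" "s*P \<le> of_int j + 1"
      using A by auto
    have si: "s = (of_int i + \<epsilon>) / Q" using h(3) P0 by (simp add: eq_divide_eq)
    have sq: "Q*(s*P) = P * of_int i + P*\<epsilon>" using h(3) by (simp add: algebra_simps)
    have "0 \<le> s*Q" using h(1) P0 by simp
    then have i0: "0 \<le> i" using h(3) 3 by simp
    have "s*Q < 1*Q" using h(2) P0 by (intro mult_strict_right_mono) auto
    then have i1: "i < int q" using h(3) 4 by simp
    have "Q * of_int j \<le> Q*(s*P)" using h(4) P0 by (intro mult_left_mono) auto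
    then have c1: "int q * j \<le> i * int p" using 1 sq by simp
    have "Q*(s*P) \<le> Q * (of_int j + 1)" using h(5) P0 by (intro mult_left_mono) auto
    then have c2: "i * int p < int q * (j+1)" using 2 sq by simp
    show "s = epar p q \<epsilon> (Vert, i, j) \<and> icond (int p) (int q) (Vert, i, j)"
      using si i0 i1 c1 c2 by (simp add: Q_def)
  next
    assume H: "s = epar p q \<epsilon> (Vert, i, j) \<and> icond (int p) (int q) (Vert, i, j)"
    then have si: "s = (of_int i + \<epsilon>) / Q" and i0: "0 \<le> i" and i1: "i < int q"
      and c1: "int q * j \<le> i * int p" and c2: "i * int p < int q * (j+1)" by (auto simp: Q_def)
    have sQ: "s*Q = of_int i + \<epsilon>" using si P0 by simp
    have sq: "Q*(s*P) = P * of_int i + P*\<epsilon>" using sQ by (simp add: algebra_simps)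
    have "0 \<le> s" using si i0 P0 e by simp
    moreover have "s < 1" using si i1 P0 4 by (simp add: divide_less_eq)
    moreover have "Q * of_int j \<le> Q*(s*P)" using c1 1 sq by simp
    then have "of_int j \<le> s*P" using P0 by simp
    moreover have "Q*(s*P) \<le> Q * (of_int j + 1)" using c2 2 sq by simp
    then have "s*P \<le> of_int j + 1" using P0 by simp
    ultimately show "crosses_at p q \<epsilon> (Vert, i, j) s" using A sQ by auto
  qed
qed


lemma int_eps_nonneg: "0 < (\<epsilon>::real) \<Longrightarrow> \<epsilon> < 1 \<Longrightarrow> (0 \<le> of_int i + \<epsilon>) \<longleftrightarrow> 0 \<le> i"
proof
  assume e: "0 < \<epsilon>" "\<epsilon> < 1" and a: "0 \<le> of_int i + \<epsilon>"
  show "0 \<le> i"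
  proof (rule ccontr)
    assume "\<not> 0 \<le> i"
    then have "i \<le> -1" by simp
    then have "real_of_int i \<le> -1" by simp
    then show False using a e by linarith
  qed
next
  assume "0 < \<epsilon>" "0 \<le> i" then show "0 \<le> of_int i + \<epsilon>" by simp
qed

lemma cross_diag:
  assumes p: "1 \<le> p" and q: "1 \<le> q" and e: "0 < \<epsilon>" "2 * real p * \<epsilon> < 1"
  shows "crosses_at p q \<epsilon> (Diag, i, j) s \<longleftrightarrow> s = epar p q \<epsilon> (Diag, i, j) \<and> icond (int p) (int q) (Diag, i, j)"
proof -
  define P where "P = real p"
  define Q where "Q = real q"
  define R where "R = real (p+q)"
  define n where "n = i + j + 1"
  have R: "R = P + Q" by (simp add: R_def P_def Q_def)
  have P0: "0 < P" "0 < Q" "1 \<le> P" "0 < R" using p q by (simp_all add: P_def Q_def R_def)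
  have d: "0 < P*\<epsilon>" "P*\<epsilon> < 1" using e P0 by (simp_all add: P_def)
  have e1: "\<epsilon> < 1"
  proof -
    have "\<epsilon> \<le> P*\<epsilon>" using P0 e by simp
    then show ?thesis using d by simp
  qed
  have A: "crosses_at p q \<epsilon> (Diag, i, j) s \<longleftrightarrow>
      0 \<le> s \<and> s < 1 \<and> -\<epsilon> + s*R = of_int n \<and> of_int i \<le> -\<epsilon> + s*Q \<and> -\<epsilon> + s*Q \<le> of_int i + 1"
  proof -
    have "crosses_at p q \<epsilon> (Diag, i, j) s \<longleftrightarrow>
      0 \<le> s \<and> s < 1 \<and> (-\<epsilon> + s*Q) + s*P = of_int i + of_int j + 1 \<and> of_int i \<le> -\<epsilon> + s*Q \<and> -\<epsilon> + s*Q \<le> of_int i + 1"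
      unfolding crosses_at_def seg_point_def using seg_diag[of "-\<epsilon> + s * real q" "s * real p" "of_int i" "of_int j"]
      by (simp add: P_def Q_def)
    moreover have "(-\<epsilon> + s*Q) + s*P = -\<epsilon> + s*R" by (simp add: R algebra_simps)
    then have "((-\<epsilon> + s*Q) + s*P = of_int i + of_int j + 1) \<longleftrightarrow> (-\<epsilon> + s*R = of_int n)"
      unfolding n_def by (simp only: of_int_add of_int_1)
    ultimately show ?thesis by blast
  qed
  have 1: "R * of_int i + P*\<epsilon> \<le> of_int n * Q \<longleftrightarrow> i * int (p+q) < n * int q"
  proof -
    have "R * of_int i + P*\<epsilon> \<le> of_int n * Q \<longleftrightarrow> real_of_int (i * int (p+q)) + P*\<epsilon> \<le> real_of_int (n * int q)"
      by (simp add: R_def Q_def mult.commute)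
    also have "\<dots> \<longleftrightarrow> i * int (p+q) < n * int q" by (rule small_add_le[OF d])
    finally show ?thesis .
  qed
  have 2: "of_int n * Q \<le> R * (of_int i + 1) + P*\<epsilon> \<longleftrightarrow> n * int q \<le> (i+1) * int (p+q)"
  proof -
    have "of_int n * Q \<le> R * (of_int i + 1) + P*\<epsilon> \<longleftrightarrow> real_of_int (n * int q) \<le> real_of_int ((i+1) * int (p+q)) + P*\<epsilon>"
      by (simp add: R_def Q_def mult.commute)
    also have "\<dots> \<longleftrightarrow> n * int q \<le> (i+1) * int (p+q)" by (rule small_le_add[OF d])
    finally show ?thesis .
  qed
  have 4: "of_int n + \<epsilon> < R \<longleftrightarrow> n < int (p+q)"
  proof -
    have "of_int n + \<epsilon> < R \<longleftrightarrow> real_of_int n + \<epsilon> < real_of_int (int (p+q))" by (simp add: R_def)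
    also have "\<dots> \<longleftrightarrow> n < int (p+q)" by (rule small_add_lt[OF e(1) e1])
    finally show ?thesis .
  qed
  have key: "s*R = of_int n + \<epsilon> \<Longrightarrow> R*(-\<epsilon> + s*Q) = of_int n * Q - P*\<epsilon>"
  proof -
    assume h: "s*R = of_int n + \<epsilon>"
    have "R*(-\<epsilon> + s*Q) = -(R*\<epsilon>) + (s*R)*Q" by (simp add: algebra_simps)
    also have "\<dots> = of_int n * Q - P*\<epsilon>" using h by (simp add: R algebra_simps)
    finally show ?thesis .
  qed
  have ex: "R*(of_int i + 1) = R * of_int i + R" by (simp add: algebra_simps)
  show ?thesis
  proof
    assume H: "crosses_at p q \<epsilon> (Diag, i, j) s"
    then have h: "0 \<le> s" "s < 1" "s*R = of_int n + \<epsilon>" "of_int i \<le> -\<epsilon> + s*Q" "-\<epsilon> + s*Q \<le> of_int i + 1"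
      using A by auto
    have si: "s = (of_int n + \<epsilon>) / R" using h(3) P0 by (simp add: eq_divide_eq)
    have k: "R*(-\<epsilon> + s*Q) = of_int n * Q - P*\<epsilon>" using key h(3) by simp
    have "0 \<le> s*R" using h(1) P0 by simp
    then have n0: "0 \<le> n" using h(3) int_eps_nonneg[OF e(1) e1] by simp
    have "s*R < 1*R" using h(2) P0 by (intro mult_strict_right_mono) auto
    then have n1: "n < int (p+q)" using h(3) 4 by simp
    have "R * of_int i \<le> R*(-\<epsilon> + s*Q)" using h(4) P0 by (intro mult_left_mono) auto
    then have c1: "i * int (p+q) < n * int q" using 1 k by linarith
    have "R*(-\<epsilon> + s*Q) \<le> R * (of_int i + 1)" using h(5) P0 by (intro mult_left_mono) auto
    then have c2: "n * int q \<le> (i+1) * int (p+q)" using 2 k ex by linarith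
    show "s = epar p q \<epsilon> (Diag, i, j) \<and> icond (int p) (int q) (Diag, i, j)"
      using si n0 n1 c1 c2 by (simp add: R_def n_def add.assoc)
  next
    assume H: "s = epar p q \<epsilon> (Diag, i, j) \<and> icond (int p) (int q) (Diag, i, j)"
    then have si: "s = (of_int n + \<epsilon>) / R" and n0: "0 \<le> n" and n1: "n < int (p+q)"
      and c1: "i * int (p+q) < n * int q" and c2: "n * int q \<le> (i+1) * int (p+q)"
      by (auto simp: R_def n_def add.assoc)
    have sR: "s*R = of_int n + \<epsilon>" using si P0 by simp
    have k: "R*(-\<epsilon> + s*Q) = of_int n * Q - P*\<epsilon>" using key sR by simp
    have "0 \<le> s" using si n0 P0 e by simp
    moreover have "s < 1" using si n1 P0 4 by (simp add: divide_less_eq)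
    moreover have "R * of_int i \<le> R*(-\<epsilon> + s*Q)" using c1 1 k by linarith
    then have "of_int i \<le> -\<epsilon> + s*Q" using P0 by simp
    moreover have "R*(-\<epsilon> + s*Q) \<le> R * (of_int i + 1)" using c2 2 k ex by linarith
    then have "-\<epsilon> + s*Q \<le> of_int i + 1" using P0 by simp
    ultimately show "crosses_at p q \<epsilon> (Diag, i, j) s" using A sR by auto
  qed
qed

lemma cross_char:
  assumes p: "1 \<le> p" and q: "1 \<le> q" and e: "0 < \<epsilon>" "2 * real p * \<epsilon> < 1"
  shows "crosses_at p q \<epsilon> e s \<longleftrightarrow> s = epar p q \<epsilon> e \<and> icond (int p) (int q) e"
proof -
  obtain t i j where "e = (t, i, j)" by (metis prod.exhaust)
  then show ?thesis using cross_hor[OF assms] cross_vert[OF assms] cross_diag[OF assms]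
    by (cases t) auto
qed


definition edg :: "int \<Rightarrow> int \<Rightarrow> nat \<Rightarrow> edge" where
  "edg p q k = (let n = int (k div 2) in
     if odd k then (Diag, cc p q n - 1, n - cc p q n)
     else if cc p q n = cc p q (n-1) then (Hor, cc p q n - 1, n - cc p q n)
     else (Vert, cc p q (n-1), n - 1 - cc p q (n-1)))"

lemma fst_edg: "fst (edg p q k) = ltyp p q k"
  by (simp add: edg_def ltyp_def Let_def)

lemma edg_icond:
  fixes p q :: int
  assumes p: "1 \<le> p" and q: "1 \<le> q" and k: "k < nat (2*(p+q))"
  shows "icond p q (edg p q k)"
proof -
  define n where "n = int (k div 2)"
  define N where "N = p+q"
  have N0: "0 < N" using p q by (simp add: N_def)
  have n0: "0 \<le> n" "n < N" using k by (auto simp: n_def N_def)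
  have B: "(cc p q n - 1)*N < n*q" "n*q \<le> cc p q n * N"
    using cc_bounds[of p q n] N0 by (simp_all add: N_def)
  have B1: "(cc p q (n-1) - 1)*N < (n-1)*q" "(n-1)*q \<le> cc p q (n-1) * N"
    using cc_bounds[of p q "n-1"] N0 by (simp_all add: N_def)
  show ?thesis
  proof (cases "odd k")
    case True
    then show ?thesis using n0 B by (simp add: edg_def n_def[symmetric] N_def algebra_simps)
  next
    case False
    show ?thesis
    proof (cases "cc p q n = cc p q (n-1)")
      case True
      define c where "c = cc p q n"
      have b1: "(c-1)*N < (n-1)*q" using B1 True by (simp add: c_def)
      have b2: "n*q \<le> c*N" using B by (simp add: c_def)
      have cn: "c \<le> n"
      proof (rule ccontr)
        assume "\<not> c \<le> n"
        then have "n \<le> c - 1" by simp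
        then have "n*N \<le> (c-1)*N" using N0 by (intro mult_right_mono) auto
        moreover have "n*q \<le> n*N" using n0 p by (intro mult_left_mono) (auto simp: N_def)
        moreover have "(n-1)*q = n*q - q" by (simp add: algebra_simps)
        ultimately show False using b1 q by linarith
      qed
      have cp: "n - c < p"
      proof (rule ccontr)
        assume "\<not> n - c < p"
        then have "c \<le> n - p" by simp
        then have "c*N \<le> (n-p)*N" using N0 by (intro mult_right_mono) auto
        then have "n*q \<le> n*N - p*N" using b2 by (simp add: algebra_simps)
        then have "p*N \<le> p*n" by (simp add: N_def algebra_simps)
        then have "N \<le> n" using p by simp
        then show False using n0 by simp
      qed
      have i1: "p*(c-1) < (n-c)*q"
      proof -
        have "(c-1)*N = p*(c-1) + c*q - q" by (simp add: N_def algebra_simps)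
        moreover have "(n-1)*q = (n-c)*q + c*q - q" by (simp add: algebra_simps)
        ultimately show ?thesis using b1 by linarith
      qed
      have i2: "(n-c)*q \<le> p*c"
      proof -
        have "c*N = p*c + c*q" by (simp add: N_def algebra_simps)
        moreover have "n*q = (n-c)*q + c*q" by (simp add: algebra_simps)
        ultimately show ?thesis using b2 by linarith
      qed
      show ?thesis using False True cn cp i1 i2
        by (simp add: edg_def n_def[symmetric] c_def[symmetric])
    next
      case F2: False
      define c where "c = cc p q (n-1)"
      have st: "cc p q n = c + 1" using cc_step[of p q n] p q F2 by (auto simp: c_def)
      have n1: "1 \<le> n"
      proof (rule ccontr)
        assume "\<not> 1 \<le> n" then have "n = 0" using n0 by simp
        then show False using F2 cc_0[of p q] cc_m1[of p q] p q by simp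
      qed
      have b1: "(n-1)*q \<le> c*N" using B1 by (simp add: c_def)
      have b2: "c*N < n*q" using B st by simp
      have c0: "0 \<le> c"
      proof (rule ccontr)
        assume "\<not> 0 \<le> c" then have "c*N < 0" using N0 by (simp add: mult_neg_pos)
        moreover have "0 \<le> (n-1)*q" using n1 q by simp
        ultimately show False using b1 by simp
      qed
      have cq: "c < q"
      proof (rule ccontr)
        assume "\<not> c < q"
        then have "q*N \<le> c*N" using N0 by (intro mult_right_mono) auto
        moreover have "n*q \<le> (N-1)*q" using n0 q by (intro mult_right_mono) auto
        moreover have "(N-1)*q = q*N - q" by (simp add: algebra_simps)
        ultimately show False using b2 q by linarith
      qed
      have i1: "q*(n-1-c) \<le> c*p"
      proof -
        have "c*N = c*p + c*q" by (simp add: N_def algebra_simps)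
        moreover have "q*(n-1-c) = (n-1)*q - c*q" by (simp add: algebra_simps)
        ultimately show ?thesis using b1 by linarith
      qed
      have i2: "c*p < q*(n-1-c+1)"
      proof -
        have "c*N = c*p + c*q" by (simp add: N_def algebra_simps)
        moreover have "q*(n-1-c+1) = n*q - c*q" by (simp add: algebra_simps)
        ultimately show ?thesis using b2 by linarith
      qed
      show ?thesis using False F2 c0 cq i1 i2
        by (simp add: edg_def n_def[symmetric] c_def[symmetric])
    qed
  qed
qed


lemma edg_even: "even k \<Longrightarrow> int (k div 2) = n \<Longrightarrow>
   edg p q k = (if cc p q n = cc p q (n-1) then (Hor, cc p q n - 1, n - cc p q n)
     else (Vert, cc p q (n-1), n - 1 - cc p q (n-1)))"
  by (simp add: edg_def Let_def)

lemma edg_odd: "odd k \<Longrightarrow> int (k div 2) = n \<Longrightarrow> edg p q k = (Diag, cc p q n - 1, n - cc p q n)"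
  by (simp add: edg_def Let_def)

lemma edg_onto:
  fixes p q :: int
  assumes p: "1 \<le> p" and q: "1 \<le> q" and ic: "icond p q e"
  shows "\<exists>k < nat (2*(p+q)). edg p q k = e"
proof -
  define N where "N = p+q"
  have N0: "0 < N" using p q by (simp add: N_def)
  obtain t i j where e: "e = (t, i, j)" by (metis prod.exhaust)
  show ?thesis
  proof (cases t)
    case Hor
    have h: "0 \<le> j" "j < p" "p*i < j*q" "j*q \<le> p*(i+1)" using ic e Hor by auto
    define n where "n = j + i + 1"
    have i0: "0 \<le> i + 1"
    proof (rule ccontr)
      assume "\<not> 0 \<le> i + 1" then have "p*(i+1) < 0" using p by (simp add: mult_pos_neg)
      moreover have "0 \<le> j*q" using h q by simp
      ultimately show False using h by simp
    qed
    have iq: "i < q"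
    proof (rule ccontr)
      assume "\<not> i < q" then have "p*q \<le> p*i" using p by (intro mult_left_mono) auto
      moreover have "j*q \<le> (p-1)*q" using h q by (intro mult_right_mono) auto
      moreover have "(p-1)*q = p*q - q" by (simp add: algebra_simps)
      ultimately show False using h q by linarith
    qed
    have c1: "cc p q n = i + 1"
      by (rule cc_unique) (use h p q in \<open>simp_all add: n_def algebra_simps\<close>)
    have c2: "cc p q (n-1) = i + 1"
      by (rule cc_unique) (use h p q in \<open>simp_all add: n_def algebra_simps\<close>)
    have n0: "0 \<le> n" "n < N" using h i0 iq by (simp_all add: n_def N_def)
    define k where "k = 2 * nat n"
    have kn: "even k" "int (k div 2) = n" using n0 by (simp_all add: k_def)
    have "edg p q k = e" using edg_even[OF kn] c1 c2 e Hor by (simp add: n_def)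
    moreover have "k < nat (2*(p+q))" using n0 by (simp add: k_def N_def)
    ultimately show ?thesis by blast
  next
    case Vert
    have h: "0 \<le> i" "i < q" "q*j \<le> i*p" "i*p < q*(j+1)" using ic e Vert by auto
    define n where "n = i + j + 1"
    have j0: "0 \<le> j"
    proof (rule ccontr)
      assume "\<not> 0 \<le> j" then have "q*(j+1) \<le> 0" using q by (simp add: mult_nonneg_nonpos)
      moreover have "0 \<le> i*p" using h p by simp
      ultimately show False using h by simp
    qed
    have jp: "j < p"
    proof (rule ccontr)
      assume "\<not> j < p" then have "q*p \<le> q*j" using q by (intro mult_left_mono) auto
      moreover have "i*p \<le> (q-1)*p" using h p by (intro mult_right_mono) auto
      moreover have "(q-1)*p = q*p - p" by (simp add: algebra_simps)
      ultimately show False using h p by linarith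
    qed
    have c1: "cc p q (n-1) = i"
      by (rule cc_unique) (use h p q in \<open>simp_all add: n_def algebra_simps\<close>)
    have c2: "cc p q n = i + 1"
      by (rule cc_unique) (use h p q in \<open>simp_all add: n_def algebra_simps\<close>)
    have n0: "0 \<le> n" "n < N" using h j0 jp by (simp_all add: n_def N_def)
    define k where "k = 2 * nat n"
    have kn: "even k" "int (k div 2) = n" using n0 by (simp_all add: k_def)
    have "edg p q k = e" using edg_even[OF kn] c1 c2 e Vert by (simp add: n_def)
    moreover have "k < nat (2*(p+q))" using n0 by (simp add: k_def N_def)
    ultimately show ?thesis by blast
  next
    case Diag
    have h: "0 \<le> i+j+1" "i+j+1 < p+q" "i*(p+q) < (i+j+1)*q" "(i+j+1)*q \<le> (i+1)*(p+q)"
      using ic e Diag by auto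
    define n where "n = i + j + 1"
    have c1: "cc p q n = i + 1"
      by (rule cc_unique) (use h p q in \<open>simp_all add: n_def\<close>)
    define k where "k = 2 * nat n + 1"
    have kn: "odd k" "int (k div 2) = n" using h by (simp_all add: k_def n_def)
    have "edg p q k = e" using edg_odd[OF kn] c1 e Diag by (simp add: n_def)
    moreover have "k < nat (2*(p+q))" using h by (simp add: k_def n_def)
    ultimately show ?thesis by blast
  qed
qed


lemma frac_lt_iff: "0 < (P::real) \<Longrightarrow> 0 < R \<Longrightarrow> (a / P < b / R) \<longleftrightarrow> a * R < b * P"
  by (simp add: field_simps)

lemma epar_step:
  fixes p q :: nat
  assumes p: "1 \<le> p" and q: "1 \<le> q" and e: "0 < \<epsilon>" "2 * real p * \<epsilon> < 1"
    and k: "Suc k < nat (2*(int p + int q))"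
  shows "epar p q \<epsilon> (edg (int p) (int q) k) < epar p q \<epsilon> (edg (int p) (int q) (Suc k))"
proof -
  define P where "P = real p"
  define Q where "Q = real q"
  define R where "R = real (p+q)"
  define N where "N = int p + int q"
  have RN: "R = real_of_int N" by (simp add: R_def N_def)
  have R: "R = P + Q" by (simp add: R_def P_def Q_def)
  have P0: "0 < P" "0 < Q" "0 < R" "1 \<le> P" using p q by (simp_all add: P_def Q_def R_def)
  have N0: "0 < N" using p q by (simp add: N_def)
  have d: "0 < P*\<epsilon>" "P*\<epsilon> < 1" using e P0 by (simp_all add: P_def)
  define n where "n = int (k div 2)"
  let ?cc = "cc (int p) (int q)"
  have B: "\<And>m. (?cc m - 1)*N < m*int q" "\<And>m. m*int q \<le> ?cc m * N"
    using cc_bounds[of "int p" "int q"] N0 by (simp_all add: N_def)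
  have Dval: "\<And>m. epar p q \<epsilon> (Diag, ?cc m - 1, m - ?cc m) = (of_int m + \<epsilon>) / R"
    by (simp add: R_def)
  show ?thesis
  proof (cases "odd k")
    case False
    have kn: "even k" "int (k div 2) = n" using False by (simp_all add: n_def)
    have kn1: "odd (Suc k)" "int (Suc k div 2) = n" using False by (simp_all add: n_def)
    have rhs: "epar p q \<epsilon> (edg (int p) (int q) (Suc k)) = (of_int n + \<epsilon>) / R"
      using edg_odd[OF kn1] Dval by simp
    show ?thesis
    proof (cases "?cc n = ?cc (n-1)")
      case True
      define c where "c = ?cc n"
      have lhs: "epar p q \<epsilon> (edg (int p) (int q) k) = of_int (n - c) / P"
        using edg_even[OF kn] True by (simp add: c_def P_def)
      have i1: "(n-c)*N \<le> n * int p"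
      proof -
        have "n*int q \<le> c*N" using B(2)[of n] by (simp add: c_def)
        then show ?thesis by (simp add: N_def algebra_simps)
      qed
      have "real_of_int ((n-c)*N) \<le> real_of_int (n * int p)" using i1 by (simp only: of_int_le_iff)
      then have "of_int (n-c) * R \<le> of_int n * P" unfolding RN P_def by (simp only: of_int_mult of_int_of_nat_eq)
      moreover have "of_int n * P < (of_int n + \<epsilon>) * P" using P0 e by (simp add: algebra_simps)
      ultimately have "of_int (n-c) * R < (of_int n + \<epsilon>) * P" by linarith
      then show ?thesis using lhs rhs frac_lt_iff[OF P0(1) P0(3)] by simp
    next
      case F2: False
      define c where "c = ?cc (n-1)"
      have st: "?cc n = c + 1" using cc_step[of "int p" "int q" n] p q F2 by (auto simp: c_def)
      have lhs: "epar p q \<epsilon> (edg (int p) (int q) k) = (of_int c + \<epsilon>) / Q"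
        using edg_even[OF kn] F2 by (simp add: c_def Q_def)
      have i1: "c*N < n * int q" using B(1)[of n] st by simp
      have "real_of_int (c*N) + P*\<epsilon> < real_of_int (n * int q)" using small_add_lt[OF d] i1 by blast
      then have "(of_int c + \<epsilon>) * R < (of_int n + \<epsilon>) * Q" by (simp add: RN R N_def algebra_simps P_def Q_def)
      then show ?thesis using lhs rhs frac_lt_iff[OF P0(2) P0(3)] by simp
    qed
  next
    case True
    have kn: "odd k" "int (k div 2) = n" using True by (simp_all add: n_def)
    have kn1: "even (Suc k)" "int (Suc k div 2) = n + 1" using True by (simp_all add: n_def)
    have lhs: "epar p q \<epsilon> (edg (int p) (int q) k) = (of_int n + \<epsilon>) / R"
      using edg_odd[OF kn] Dval by simp
    show ?thesis
    proof (cases "?cc (n+1) = ?cc (n+1-1)")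
      case True
      define c where "c = ?cc n"
      have c1: "?cc (n+1) = c" using True by (simp add: c_def)
      have rhs: "epar p q \<epsilon> (edg (int p) (int q) (Suc k)) = of_int (n + 1 - c) / P"
        using edg_even[OF kn1] True c1 by (simp add: P_def)
      have i1: "n * int p < (n+1-c)*N"
      proof -
        have "(c-1)*N < n*int q" using B(1)[of n] by (simp add: c_def)
        then show ?thesis by (simp add: N_def algebra_simps)
      qed
      have "real_of_int (n * int p) + P*\<epsilon> < real_of_int ((n+1-c)*N)" using small_add_lt[OF d] i1 by blast
      then have "(of_int n + \<epsilon>) * P < of_int (n+1-c) * R" by (simp add: RN P_def algebra_simps)
      then show ?thesis using lhs rhs frac_lt_iff[OF P0(3) P0(1)] by simp
    next
      case F2: False
      define c where "c = ?cc n"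
      have rhs: "epar p q \<epsilon> (edg (int p) (int q) (Suc k)) = (of_int c + \<epsilon>) / Q"
        using edg_even[OF kn1] F2 by (simp add: c_def Q_def)
      have i1: "n * int q \<le> c*N" using B(2)[of n] by (simp add: c_def)
      have "real_of_int (n * int q) < real_of_int (c*N) + P*\<epsilon>" using small_lt_add[OF d] i1 by blast
      then have "(of_int n + \<epsilon>) * Q < (of_int c + \<epsilon>) * R" by (simp add: RN R N_def algebra_simps P_def Q_def)
      then show ?thesis using lhs rhs frac_lt_iff[OF P0(3) P0(2)] by simp
    qed
  qed
qed


lemma lin2: "((a::real) - b < 0) = (2 * a < 2 * b)" by auto

lemma rs_int:
  assumes e: "0 < \<epsilon>" "2 * real p * \<epsilon> < 1" and p: "1 \<le> p"
    and A: "2 * (real q * my - real p * mx) = real_of_int A"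
  shows "right_side p q \<epsilon> (mx, my) \<longleftrightarrow> A \<le> 0"
proof -
  have d: "0 < 2 * (real p * \<epsilon>)" "2 * (real p * \<epsilon>) < 1" using e p by simp_all
  have "right_side p q \<epsilon> (mx, my) \<longleftrightarrow> real q * my - real p * mx - real p * \<epsilon> < 0"
    by (simp add: right_side_def algebra_simps)
  also have "\<dots> \<longleftrightarrow> 2 * (real q * my - real p * mx) < 2 * (real p * \<epsilon>)"
    by (rule lin2)
  also have "\<dots> \<longleftrightarrow> real_of_int A < real_of_int 0 + 2 * (real p * \<epsilon>)" using A by simp
  also have "\<dots> \<longleftrightarrow> A \<le> 0" by (rule small_lt_add[OF d])
  finally show ?thesis .
qed

lemma right_side_edg:
  fixes p q :: nat
  assumes p: "1 \<le> p" and q: "1 \<le> q" and e: "0 < \<epsilon>" "2 * real p * \<epsilon> < 1"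
  shows "right_side p q \<epsilon> (edge_mid (edg (int p) (int q) k)) \<longleftrightarrow> \<not> 0 < lsig (int p) (int q) k"
proof -
  define n where "n = int (k div 2)"
  let ?cc = "cc (int p) (int q)"
  show ?thesis
  proof (cases "odd k")
    case True
    have kn: "odd k" "int (k div 2) = n" using True by (simp_all add: n_def)
    define c where "c = ?cc n"
    have m: "edge_mid (edg (int p) (int q) k) = ((2 * of_int (c-1)+1)/2, (2 * of_int (n-c)+1)/2)"
      using edg_odd[OF kn] by (simp add: edge_mid_def c_def field_simps)
    define A where "A = int q * (2*(n-c)+1) - int p * (2*(c-1)+1)"
    have "2 * (real q * ((2 * of_int (n-c)+1)/2) - real p * ((2 * of_int (c-1)+1)/2)) = real_of_int A"
      by (simp add: A_def field_simps)
    then have r: "right_side p q \<epsilon> (edge_mid (edg (int p) (int q) k)) \<longleftrightarrow> A \<le> 0"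
      unfolding m by (rule rs_int[OF e p])
    have "A = lsig (int p) (int q) k" using kn by (simp add: A_def lsig_def dd_def c_def algebra_simps)
    then show ?thesis using r by (simp add: not_less)
  next
    case False
    have kn: "even k" "int (k div 2) = n" using False by (simp_all add: n_def)
    show ?thesis
    proof (cases "?cc n = ?cc (n-1)")
      case True
      define c where "c = ?cc n"
      have m: "edge_mid (edg (int p) (int q) k) = ((2 * of_int (c-1)+1)/2, of_int (n-c))"
        using edg_even[OF kn] True by (simp add: edge_mid_def c_def field_simps)
      define A where "A = 2 * int q * (n-c) - int p * (2*(c-1)+1)"
      have "2 * (real q * of_int (n-c) - real p * ((2 * of_int (c-1)+1)/2)) = real_of_int A"
        by (simp add: A_def field_simps)
      then have r: "right_side p q \<epsilon> (edge_mid (edg (int p) (int q) k)) \<longleftrightarrow> A \<le> 0"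
        unfolding m by (rule rs_int[OF e p])
      have "A = lsig (int p) (int q) k" using kn True by (simp add: A_def lsig_def dd_def c_def algebra_simps)
      then show ?thesis using r by (simp add: not_less)
    next
      case F2: False
      define c where "c = ?cc (n-1)"
      have m: "edge_mid (edg (int p) (int q) k) = (of_int c, (2 * of_int (n-1-c)+1)/2)"
        using edg_even[OF kn] F2 by (simp add: edge_mid_def c_def field_simps)
      define A where "A = int q * (2*(n-1-c)+1) - 2 * int p * c"
      have "2 * (real q * ((2 * of_int (n-1-c)+1)/2) - real p * of_int c) = real_of_int A"
        by (simp add: A_def field_simps)
      then have r: "right_side p q \<epsilon> (edge_mid (edg (int p) (int q) k)) \<longleftrightarrow> A \<le> 0"
        unfolding m by (rule rs_int[OF e p])
      have "A = lsig (int p) (int q) k" using kn F2 by (simp add: A_def lsig_def dd_def c_def algebra_simps)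
      then show ?thesis using r by (simp add: not_less)
    qed
  qed
qed


lemma crossed_list_eq:
  fixes p q :: nat
  assumes p: "1 \<le> p" and q: "1 \<le> q" and e: "0 < \<epsilon>" "2 * real p * \<epsilon> < 1"
  shows "crossed_list p q \<epsilon> = map (edg (int p) (int q)) [0..<nat (2*(int p + int q))]"
proof -
  define n2 where "n2 = nat (2*(int p + int q))"
  define E where "E = edg (int p) (int q)"
  define L where "L = map E [0..<n2]"
  define f where "f = epar p q \<epsilon>"
  have cc: "\<And>e s. crosses_at p q \<epsilon> e s \<longleftrightarrow> s = f e \<and> icond (int p) (int q) e"
    unfolding f_def by (rule cross_char[OF p q e])
  have CE: "crossed_edges p q \<epsilon> = {e. icond (int p) (int q) e}"
    using cc by (auto simp: crossed_edges_def)
  have CP: "icond (int p) (int q) e \<Longrightarrow> cross_param p q \<epsilon> e = f e" for e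
    unfolding cross_param_def cc by simp
  have S: "{e. icond (int p) (int q) e} = set L"
  proof
    show "{e. icond (int p) (int q) e} \<subseteq> set L"
    proof
      fix e assume "e \<in> {e. icond (int p) (int q) e}"
      then have "icond (int p) (int q) e" by simp
      then obtain k where k: "k < n2" "edg (int p) (int q) k = e"
        using edg_onto[of "int p" "int q" e] p q unfolding n2_def by auto
      then show "e \<in> set L" unfolding L_def E_def by force
    qed
    show "set L \<subseteq> {e. icond (int p) (int q) e}"
      using edg_icond[of "int p" "int q"] p q by (auto simp: L_def E_def n2_def)
  qed
  have step: "Suc k < n2 \<Longrightarrow> f (E k) < f (E (Suc k))" for k
    unfolding f_def E_def n2_def by (rule epar_step[OF p q e])
  have mono: "i < j \<Longrightarrow> j < n2 \<Longrightarrow> f (E i) < f (E j)" for i j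
  proof (induction j)
    case 0 then show ?case by simp
  next
    case (Suc j)
    show ?case
    proof (cases "i = j")
      case True then show ?thesis using step Suc.prems by simp
    next
      case False
      then have "f (E i) < f (E j)" using Suc by simp
      also have "\<dots> < f (E (Suc j))" using step Suc.prems by simp
      finally show ?thesis .
    qed
  qed
  have injE: "inj_on (f \<circ> E) {0..<n2}"
  proof (rule inj_onI)
    fix i j assume "i \<in> {0..<n2}" "j \<in> {0..<n2}" "(f \<circ> E) i = (f \<circ> E) j"
    then show "i = j" using mono[of i j] mono[of j i] by (cases "i < j"; cases "j < i") auto
  qed
  have sL: "sorted_wrt (\<lambda>x y. f x < f y) L"
    unfolding L_def sorted_wrt_map sorted_wrt_iff_nth_less using mono by simp
  have injf: "inj_on f (set L)"
    using injE unfolding L_def by (auto simp: inj_on_def)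
  have dL: "distinct L"
    unfolding L_def using injE by (simp add: distinct_map inj_on_imageI2)
  have sortL: "sorted_wrt (\<lambda>x y. cross_param p q \<epsilon> x < cross_param p q \<epsilon> y) L"
  proof -
    have "\<forall>x\<in>set L. cross_param p q \<epsilon> x = f x" using CP S by auto
    then show ?thesis using sL by (simp add: sorted_wrt_iff_nth_less nth_mem)
  qed
  have uniq: "es = L" if h: "distinct es" "set es = crossed_edges p q \<epsilon>"
      "sorted_wrt (\<lambda>x y. cross_param p q \<epsilon> x < cross_param p q \<epsilon> y) es" for es
  proof -
    have se: "set es = set L" using h CE S by simp
    have "\<forall>x\<in>set es. cross_param p q \<epsilon> x = f x" using CP S se by auto
    then have "sorted_wrt (\<lambda>x y. f x < f y) es" using h(3) by (simp add: sorted_wrt_iff_nth_less nth_mem)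
    then have "sorted_wrt (<) (map f es)" by (simp add: sorted_wrt_map)
    then have a: "sorted (map f es)" "distinct (map f es)" by (simp_all add: strict_sorted_iff)
    have "sorted_wrt (<) (map f L)" using sL by (simp add: sorted_wrt_map)
    then have b: "sorted (map f L)" "distinct (map f L)" by (simp_all add: strict_sorted_iff)
    have "map f es = map f L" by (rule sorted_distinct_set_unique) (use a b se in auto)
    then show ?thesis using inj_on_map_eq_map[of f es L] injf se by simp
  qed
  have "crossed_list p q \<epsilon> = L"
    unfolding crossed_list_def
  proof (rule the_equality)
    show "distinct L \<and> set L = crossed_edges p q \<epsilon> \<and>
        sorted_wrt (\<lambda>x y. cross_param p q \<epsilon> x < cross_param p q \<epsilon> y) L"
      using dL CE S sortL by simp
  next
    fix es assume "distinct es \<and> set es = crossed_edges p q \<epsilon> \<and>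
        sorted_wrt (\<lambda>x y. cross_param p q \<epsilon> x < cross_param p q \<epsilon> y) es"
    then show "es = L" using uniq by blast
  qed
  then show ?thesis by (simp add: L_def E_def n2_def)
qed

lemma word_eps_eq:
  fixes p q :: nat
  assumes p: "1 \<le> p" and q: "1 \<le> q" and e: "0 < \<epsilon>" "2 * real p * \<epsilon> < 1"
  shows "word_eps p q \<epsilon> = Wd (int p) (int q)"
  unfolding word_eps_def crossed_list_eq[OF assms] Wd_def
  by (simp add: right_side_edg[OF assms] fst_edg lett_def)

lemma omega_bar_Wd':
  fixes p q :: nat
  assumes p: "1 \<le> p" and q: "1 \<le> q"
  shows "omega_bar p q = Wd (int p) (int q)"
proof -
  have ev: "eventually (\<lambda>\<epsilon>. word_eps p q \<epsilon> = Wd (int p) (int q)) (at_right 0)"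
    unfolding eventually_at_right_field
  proof (intro exI[of _ "1 / (2 * real p)"] conjI allI impI)
    show "(0::real) < 1 / (2 * real p)" using p by simp
  next
    fix \<epsilon> :: real assume "0 < \<epsilon>" "\<epsilon> < 1 / (2 * real p)"
    moreover then have "2 * real p * \<epsilon> < 1" using p by (simp add: field_simps)
    ultimately show "word_eps p q \<epsilon> = Wd (int p) (int q)" using word_eps_eq[OF p q] by simp
  qed
  show ?thesis
    unfolding omega_bar_def
  proof (rule the_equality)
    show "eventually (\<lambda>\<epsilon>. word_eps p q \<epsilon> = Wd (int p) (int q)) (at_right 0)" by (rule ev)
  next
    fix w assume "eventually (\<lambda>\<epsilon>. word_eps p q \<epsilon> = w) (at_right (0::real))"
    then have "eventually (\<lambda>\<epsilon>. w = Wd (int p) (int q)) (at_right (0::real))"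
      using ev by eventually_elim simp
    then show "w = Wd (int p) (int q)" by simp
  qed
qed

lemma omega_bar_Wd:
  assumes "coprime p q" "0 < p" "0 < q"
  shows "omega_bar p q = Wd (int p) (int q)"
  using omega_bar_Wd'[of p q] assms by simp

theorem theorem5p6:
  fixes k1 k2 k3 :: nat and \<sigma> :: "nat \<Rightarrow> nat" and p q :: nat
  assumes "\<sigma> permutes {1, 2, 3}"
    and "coprime p q" and "0 < p" and "0 < q"
  shows "cohn_matrix (kfun k1 k2 k3) \<sigma> p q =
         m2_mult (M2 (-1) 0 0 1) (m2_mult (M_bar (kfun k1 k2 k3) \<sigma> p q) (M2 1 0 0 (-1)))"
proof -
  let ?k = "kfun k1 k2 k3"
  define w where "w = (SOME w. fst (snd (farey_vertex w)) = (p, q))"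
  have ex: "\<exists>w. fst (snd (farey_vertex w)) = (p,q)" by (rule exists_vertex) (use assms in auto)
  have wt: "fst (snd (farey_vertex w)) = (p,q)" unfolding w_def by (rule someI_ex[OF ex])
  have I: "Inv ?k \<sigma> w" by (rule tree_inv[OF hK_perm[OF assms(1)]])
  have "fst (snd (cohn_vertex ?k \<sigma> w)) = Mc ?k \<sigma> (p,q)"
    using I wt by (auto simp: Inv_def split: prod.splits)
  also have "\<dots> = Tmat (word_matrix ?k \<sigma> (Wd (int p) (int q)))" using assms by (simp add: Mc_def)
  finally have "cohn_matrix ?k \<sigma> p q = Tmat (word_matrix ?k \<sigma> (Wd (int p) (int q)))"
    by (simp add: cohn_matrix_def w_def)
  then show ?thesis using omega_bar_Wd[OF assms(2-4)] by (simp add: M_bar_def Tmat_def)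
qed

end
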